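(* Let $\mathcal C$ be a small upper-triangular linear category. Then for all $i\ge0$ $$\operatorname{HH}_i(\mathcal C)\cong\bigoplus_{x\in\operatorname{Ob}(\mathcal C)}\operatorname{HH}_i(\mathcal C(x,x)),$$ where $\operatorname{HH}_i(\mathcal C(x,x))$ is the Hochschild homology of the endomorphism ring $\mathcal C(x,x)$.
   Context: A small linear category $\mathcal C$ is upper-triangular if there is a partial order $\le$ on $\operatorname{Ob}(\mathcal C)$ such that $\mathcal C(x,y)\neq0$ implies $x\le y$. The Hochschild–Mitchell complex of $\mathcal C$ has $C_n=\bigoplus_{x_0,\dots,x_n\in\operatorname{Ob}(\mathcal C)}\mathcal C(x_n,x_0)\otimes\mathcal C(x_{n-1},x_n)\otimes\dots\otimes\mathcal C(x_0,x_1)$ (tensor over $\mathbb Z$) with differential $d_n(f_n\otimes\dots\otimes f_0)=\sum_{i=0}^{n-1}(-1)^i f_n\otimes\dots\otimes f_{n-i}f_{n-i-1}\otimes\dots\otimes f_0+(-1)^n f_0f_n\otimes f_{n-1}\otimes\dots\otimes f_1$; $\operatorname{HH}_*(\mathcal C)$ is its homology. For a ring $R$ (a one-object linear category), this is the usual Hochschild complex $C_n(R)=R^{\otimes n+1}$. *)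

theory Defs
  imports "HOL-Algebra.Free_Abelian_Groups"
begin

text \<open>A small (Z-)linear category: a set of objects Ob, for each pair of objects an
abelian group Hm x y (written multiplicatively, as in HOL-Algebra), composition
cmp x y z g f = g o f for f in Hm x y and g in Hm y z, and identities idm x.\<close>

definition linear_category ::
  "'o set \<Rightarrow> ('o \<Rightarrow> 'o \<Rightarrow> 'm monoid) \<Rightarrow> ('o \<Rightarrow> 'o \<Rightarrow> 'o \<Rightarrow> 'm \<Rightarrow> 'm \<Rightarrow> 'm) \<Rightarrow> ('o \<Rightarrow> 'm) \<Rightarrow> bool"
  where "linear_category Ob Hm cmp idm \<longleftrightarrow>
    (\<forall>x\<in>Ob. \<forall>y\<in>Ob. comm_group (Hm x y)) \<and>
    (\<forall>x\<in>Ob. \<forall>y\<in>Ob. \<forall>z\<in>Ob. \<forall>f\<in>carrier (Hm x y). \<forall>g\<in>carrier (Hm y z).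
        cmp x y z g f \<in> carrier (Hm x z)) \<and>
    (\<forall>x\<in>Ob. idm x \<in> carrier (Hm x x)) \<and>
    (\<forall>w\<in>Ob. \<forall>x\<in>Ob. \<forall>y\<in>Ob. \<forall>z\<in>Ob. \<forall>f\<in>carrier (Hm w x). \<forall>g\<in>carrier (Hm x y).
        \<forall>h\<in>carrier (Hm y z). cmp w y z h (cmp w x y g f) = cmp w x z (cmp x y z h g) f) \<and>
    (\<forall>x\<in>Ob. \<forall>y\<in>Ob. \<forall>f\<in>carrier (Hm x y).
        cmp x y y (idm y) f = f \<and> cmp x x y f (idm x) = f) \<and>
    (\<forall>x\<in>Ob. \<forall>y\<in>Ob. \<forall>z\<in>Ob. \<forall>f\<in>carrier (Hm x y). \<forall>f'\<in>carrier (Hm x y).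
        \<forall>g\<in>carrier (Hm y z). \<forall>g'\<in>carrier (Hm y z).
        cmp x y z (g \<otimes>\<^bsub>Hm y z\<^esub> g') f = cmp x y z g f \<otimes>\<^bsub>Hm x z\<^esub> cmp x y z g' f \<and>
        cmp x y z g (f \<otimes>\<^bsub>Hm x y\<^esub> f') = cmp x y z g f \<otimes>\<^bsub>Hm x z\<^esub> cmp x y z g f')"

definition upper_triangular :: "'o set \<Rightarrow> ('o \<Rightarrow> 'o \<Rightarrow> 'm monoid) \<Rightarrow> bool"
  where "upper_triangular Ob Hm \<longleftrightarrow>
    (\<exists>r. partial_order_on Ob r \<and>
         (\<forall>x\<in>Ob. \<forall>y\<in>Ob. carrier (Hm x y) \<noteq> {\<one>\<^bsub>Hm x y\<^esub>} \<longrightarrow> (x, y) \<in> r))"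

text \<open>Generators of C_n: pairs (xs, fs) with xs = [x_0,...,x_n] and fs = [f_0,...,f_n],
  f_k \<in> C(x_k, x_{k+1}) for k < n and f_n \<in> C(x_n, x_0) (indices mod n+1).
  (xs, fs) stands for the elementary tensor f_n \<otimes> ... \<otimes> f_0 in the summand indexed by xs.\<close>

definition hm_gens :: "'o set \<Rightarrow> ('o \<Rightarrow> 'o \<Rightarrow> 'm monoid) \<Rightarrow> nat \<Rightarrow> ('o list \<times> 'm list) set"
  where "hm_gens Ob Hm n = {(xs, fs). length xs = Suc n \<and> length fs = Suc n \<and> set xs \<subseteq> Ob \<and>
     (\<forall>k<Suc n. fs ! k \<in> carrier (Hm (xs ! k) (xs ! (Suc k mod Suc n))))}"

definition hm_free :: "'o set \<Rightarrow> ('o \<Rightarrow> 'o \<Rightarrow> 'm monoid) \<Rightarrow> nat \<Rightarrow> (('o list \<times> 'm list) \<Rightarrow>\<^sub>0 int) monoid"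
  where "hm_free Ob Hm n = free_Abelian_group (hm_gens Ob Hm n)"

definition hm_rels :: "'o set \<Rightarrow> ('o \<Rightarrow> 'o \<Rightarrow> 'm monoid) \<Rightarrow> nat \<Rightarrow> (('o list \<times> 'm list) \<Rightarrow>\<^sub>0 int) set"
  where "hm_rels Ob Hm n =
    {frag_of (xs, fs[k := a \<otimes>\<^bsub>Hm (xs ! k) (xs ! (Suc k mod Suc n))\<^esub> b])
       - frag_of (xs, fs[k := a]) - frag_of (xs, fs[k := b]) | xs fs k a b.
       (xs, fs) \<in> hm_gens Ob Hm n \<and> k < Suc n \<and>
       a \<in> carrier (Hm (xs ! k) (xs ! (Suc k mod Suc n))) \<and>
       b \<in> carrier (Hm (xs ! k) (xs ! (Suc k mod Suc n)))}"

definition hm_chains :: "'o set \<Rightarrow> ('o \<Rightarrow> 'o \<Rightarrow> 'm monoid) \<Rightarrow> nat \<Rightarrow> (('o list \<times> 'm list) \<Rightarrow>\<^sub>0 int) set monoid"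
  where "hm_chains Ob Hm n =
    hm_free Ob Hm n Mod generate (hm_free Ob Hm n) (hm_rels Ob Hm n)"

text \<open>Faces of an elementary tensor in degree n \<ge> 1.
  hm_face j (1 \<le> j \<le> n): replaces f_j, f_{j-1} by f_j f_{j-1} (deleting x_j);
  it is the term i = n - j of the differential, with sign (-1)^i.
  hm_lastface: the term f_0 f_n \<otimes> f_{n-1} \<otimes> ... \<otimes> f_1, sign (-1)^n.\<close>

definition hm_face :: "('o \<Rightarrow> 'o \<Rightarrow> 'o \<Rightarrow> 'm \<Rightarrow> 'm \<Rightarrow> 'm) \<Rightarrow> nat \<Rightarrow> nat \<Rightarrow> 'o list \<times> 'm list \<Rightarrow> 'o list \<times> 'm list"
  where "hm_face cmp n j t = (case t of (xs, fs) \<Rightarrow>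
     (take j xs @ drop (Suc j) xs,
      take (j - 1) fs @
        [cmp (xs ! (j - 1)) (xs ! j) (xs ! (Suc j mod Suc n)) (fs ! j) (fs ! (j - 1))] @
        drop (Suc j) fs))"

definition hm_lastface :: "('o \<Rightarrow> 'o \<Rightarrow> 'o \<Rightarrow> 'm \<Rightarrow> 'm \<Rightarrow> 'm) \<Rightarrow> nat \<Rightarrow> 'o list \<times> 'm list \<Rightarrow> 'o list \<times> 'm list"
  where "hm_lastface cmp n t = (case t of (xs, fs) \<Rightarrow>
     (tl xs, take (n - 1) (tl fs) @ [cmp (xs ! n) (xs ! 0) (xs ! 1) (fs ! 0) (fs ! n)]))"

definition hm_bd_gen :: "('o \<Rightarrow> 'o \<Rightarrow> 'o \<Rightarrow> 'm \<Rightarrow> 'm \<Rightarrow> 'm) \<Rightarrow> nat \<Rightarrow> 'o list \<times> 'm list \<Rightarrow> ('o list \<times> 'm list) \<Rightarrow>\<^sub>0 int"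
  where "hm_bd_gen cmp n t =
     (\<Sum>i<n. frag_cmul ((-1) ^ i) (frag_of (hm_face cmp n (n - i) t)))
     + frag_cmul ((-1) ^ n) (frag_of (hm_lastface cmp n t))"

definition hm_d :: "'o set \<Rightarrow> ('o \<Rightarrow> 'o \<Rightarrow> 'm monoid) \<Rightarrow> ('o \<Rightarrow> 'o \<Rightarrow> 'o \<Rightarrow> 'm \<Rightarrow> 'm \<Rightarrow> 'm) \<Rightarrow> nat
     \<Rightarrow> (('o list \<times> 'm list) \<Rightarrow>\<^sub>0 int) set \<Rightarrow> (('o list \<times> 'm list) \<Rightarrow>\<^sub>0 int) set"
  where "hm_d Ob Hm cmp n X =
     (\<Union>c\<in>X. generate (hm_free Ob Hm (n - 1)) (hm_rels Ob Hm (n - 1))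
                #>\<^bsub>hm_free Ob Hm (n - 1)\<^esub> frag_extend (hm_bd_gen cmp n) c)"

text \<open>Cycles (Z_0 = C_0 since d_0 = 0) and Hochschild-Mitchell homology HH_n = Z_n / im d_{n+1}.\<close>

definition hm_cycles :: "'o set \<Rightarrow> ('o \<Rightarrow> 'o \<Rightarrow> 'm monoid) \<Rightarrow> ('o \<Rightarrow> 'o \<Rightarrow> 'o \<Rightarrow> 'm \<Rightarrow> 'm \<Rightarrow> 'm) \<Rightarrow> nat
     \<Rightarrow> (('o list \<times> 'm list) \<Rightarrow>\<^sub>0 int) set set"
  where "hm_cycles Ob Hm cmp n =
    (if n = 0 then carrier (hm_chains Ob Hm 0)
     else kernel (hm_chains Ob Hm n) (hm_chains Ob Hm (n - 1)) (hm_d Ob Hm cmp n))"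

definition HH :: "'o set \<Rightarrow> ('o \<Rightarrow> 'o \<Rightarrow> 'm monoid) \<Rightarrow> ('o \<Rightarrow> 'o \<Rightarrow> 'o \<Rightarrow> 'm \<Rightarrow> 'm \<Rightarrow> 'm) \<Rightarrow> nat
     \<Rightarrow> (('o list \<times> 'm list) \<Rightarrow>\<^sub>0 int) set set monoid"
  where "HH Ob Hm cmp n =
    (hm_chains Ob Hm n)\<lparr>carrier := hm_cycles Ob Hm cmp n\<rparr>
      Mod (hm_d Ob Hm cmp (Suc n) ` carrier (hm_chains Ob Hm (Suc n)))"

text \<open>Hochschild homology of the endomorphism ring C(x,x), viewed (as in the paper)
  as the one-object linear category with object x.\<close>

definition HH_endo :: "('o \<Rightarrow> 'o \<Rightarrow> 'm monoid) \<Rightarrow> ('o \<Rightarrow> 'o \<Rightarrow> 'o \<Rightarrow> 'm \<Rightarrow> 'm \<Rightarrow> 'm) \<Rightarrow> 'o \<Rightarrow> nat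
     \<Rightarrow> (('o list \<times> 'm list) \<Rightarrow>\<^sub>0 int) set set monoid"
  where "HH_endo Hm cmp x n = HH {x} Hm cmp n"

end

theory Submission
  imports Defs
begin

inductive_set zspan :: "('a \<Rightarrow>\<^sub>0 int) set \<Rightarrow> ('a \<Rightarrow>\<^sub>0 int) set" for H where
  zero: "0 \<in> zspan H"
| gen: "h \<in> H \<Longrightarrow> h \<in> zspan H"
| diff: "a \<in> zspan H \<Longrightarrow> b \<in> zspan H \<Longrightarrow> a - b \<in> zspan H"

lemma zspan_uminus: "a \<in> zspan H \<Longrightarrow> - a \<in> zspan H"
  using zspan.diff[OF zspan.zero] by fastforce

lemma zspan_add: "a \<in> zspan H \<Longrightarrow> b \<in> zspan H \<Longrightarrow> a + b \<in> zspan H"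
  by (metis diff_minus_eq_add zspan.diff zspan_uminus)

lemma zspan_sum: "(\<And>i. i \<in> I \<Longrightarrow> f i \<in> zspan H) \<Longrightarrow> sum f I \<in> zspan H"
  by (induction I rule: infinite_finite_induct) (auto intro: zspan.zero zspan_add)

lemma zspan_mono: "a \<in> zspan H \<Longrightarrow> H \<subseteq> K \<Longrightarrow> a \<in> zspan K"
  by (induction a rule: zspan.induct) (auto intro: zspan.intros)

lemma zspan_subset: "a \<in> zspan H \<Longrightarrow> H \<subseteq> zspan K \<Longrightarrow> a \<in> zspan K"
  by (induction a rule: zspan.induct) (auto intro: zspan.intros)

lemma zspan_keys: "a \<in> zspan H \<Longrightarrow> (\<And>h. h \<in> H \<Longrightarrow> Poly_Mapping.keys h \<subseteq> S) \<Longrightarrow> Poly_Mapping.keys a \<subseteq> S"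
  by (induction a rule: zspan.induct) (auto dest: subsetD[OF keys_diff])

lemma zspan_linear:
  assumes "\<And>a b. f (a - b) = f a - f b" "\<And>h. h \<in> H \<Longrightarrow> f h \<in> zspan K"
  shows "a \<in> zspan H \<Longrightarrow> f a \<in> zspan K"
proof (induction a rule: zspan.induct)
  case zero
  have "f 0 = 0" using assms(1)[of 0 0] by simp
  then show ?case by (simp add: zspan.zero)
qed (auto simp: assms intro: zspan.diff)

lemma zspan_frag_extend:
  "(\<And>h. h \<in> H \<Longrightarrow> frag_extend f h \<in> zspan K) \<Longrightarrow> a \<in> zspan H \<Longrightarrow> frag_extend f a \<in> zspan K"
  by (rule zspan_linear[where f="frag_extend f"]) (auto simp: frag_extend_diff)

lemma generate_free_zspan:
  assumes "\<And>h. h \<in> H \<Longrightarrow> Poly_Mapping.keys h \<subseteq> S"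
  shows "generate (free_Abelian_group S) H = zspan H"
proof
  show "generate (free_Abelian_group S) H \<subseteq> zspan H"
  proof
    fix x assume "x \<in> generate (free_Abelian_group S) H"
    then show "x \<in> zspan H"
      by (induction x rule: generate.induct)
         (auto simp: assms zspan.intros zspan_uminus zspan_add)
  qed
  show "zspan H \<subseteq> generate (free_Abelian_group S) H"
  proof
    fix x assume "x \<in> zspan H"
    then show "x \<in> generate (free_Abelian_group S) H"
    proof (induction x rule: zspan.induct)
      case zero
      then show ?case using generate.one[of "free_Abelian_group S" H] by simp
    next
      case (gen h)
      then show ?case by (rule generate.incl)
    next
      case (diff a b)
      have sg: "subgroup (generate (free_Abelian_group S) H) (free_Abelian_group S)"
        by (rule group.generate_is_subgroup) (auto simp: assms)
      have kb: "Poly_Mapping.keys b \<subseteq> S"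
        using diff(2) assms by (rule zspan_keys)
      have "a \<otimes>\<^bsub>free_Abelian_group S\<^esub> inv\<^bsub>free_Abelian_group S\<^esub> b \<in> generate (free_Abelian_group S) H"
        using diff sg by (meson subgroup.m_closed subgroup.m_inv_closed)
      then show ?case using kb by simp
    qed
  qed
qed

lemma face_upd_lt:
  assumes "k < j - 1" "j \<le> n" "length fs = Suc n"
  shows "hm_face cmp n j (xs, fs[k:=v]) =
    (fst (hm_face cmp n j (xs,fs)), (snd (hm_face cmp n j (xs,fs)))[k := v])"
  using assms by (auto simp: hm_face_def list_eq_iff_nth_eq nth_append nth_list_update)

lemma face_upd_gt:
  assumes "j < k" "k \<le> n" "length fs = Suc n" "1 \<le> j"
  shows "hm_face cmp n j (xs, fs[k:=v]) =
    (fst (hm_face cmp n j (xs,fs)), (snd (hm_face cmp n j (xs,fs)))[k - 1 := v])"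
  using assms by (auto simp: hm_face_def list_eq_iff_nth_eq nth_append nth_list_update nth_Cons' nth_drop)

lemma face_upd_jm1:
  assumes "1 \<le> j" "j \<le> n" "length fs = Suc n"
  shows "hm_face cmp n j (xs, fs[j - 1:=v]) =
    (fst (hm_face cmp n j (xs,fs)), (snd (hm_face cmp n j (xs,fs)))[j - 1 :=
       cmp (xs ! (j - 1)) (xs ! j) (xs ! (Suc j mod Suc n)) (fs ! j) v])"
  using assms by (auto simp: hm_face_def list_eq_iff_nth_eq nth_append nth_list_update)

lemma face_upd_j:
  assumes "1 \<le> j" "j \<le> n" "length fs = Suc n"
  shows "hm_face cmp n j (xs, fs[j:=v]) =
    (fst (hm_face cmp n j (xs,fs)), (snd (hm_face cmp n j (xs,fs)))[j - 1 :=
       cmp (xs ! (j - 1)) (xs ! j) (xs ! (Suc j mod Suc n)) v (fs ! (j - 1))])"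
  using assms by (auto simp: hm_face_def list_eq_iff_nth_eq nth_append nth_list_update)

lemma last_upd_0:
  assumes "1 \<le> n" "length fs = Suc n"
  shows "hm_lastface cmp n (xs, fs[0:=v]) =
    (fst (hm_lastface cmp n (xs,fs)), (snd (hm_lastface cmp n (xs,fs)))[n - 1 :=
       cmp (xs ! n) (xs ! 0) (xs ! 1) v (fs ! n)])"
  using assms by (auto simp: hm_lastface_def list_eq_iff_nth_eq nth_append nth_list_update nth_tl)

lemma last_upd_n:
  assumes "1 \<le> n" "length fs = Suc n"
  shows "hm_lastface cmp n (xs, fs[n:=v]) =
    (fst (hm_lastface cmp n (xs,fs)), (snd (hm_lastface cmp n (xs,fs)))[n - 1 :=
       cmp (xs ! n) (xs ! 0) (xs ! 1) (fs ! 0) v])"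
  using assms by (auto simp: hm_lastface_def list_eq_iff_nth_eq nth_append nth_list_update nth_tl)

lemma last_upd_mid:
  assumes "1 \<le> k" "k < n" "length fs = Suc n"
  shows "hm_lastface cmp n (xs, fs[k:=v]) =
    (fst (hm_lastface cmp n (xs,fs)), (snd (hm_lastface cmp n (xs,fs)))[k - 1 := v])"
  using assms by (auto simp: hm_lastface_def list_eq_iff_nth_eq nth_append nth_list_update nth_tl)

locale lc =
  fixes S :: "'o set" and Hm :: "'o \<Rightarrow> 'o \<Rightarrow> 'm monoid"
    and cmp :: "'o \<Rightarrow> 'o \<Rightarrow> 'o \<Rightarrow> 'm \<Rightarrow> 'm \<Rightarrow> 'm" and idm :: "'o \<Rightarrow> 'm"
  assumes LC: "linear_category S Hm cmp idm"
begin

lemma grp: "x \<in> S \<Longrightarrow> y \<in> S \<Longrightarrow> comm_group (Hm x y)"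
  using LC by (simp add: linear_category_def)

lemma cmp_closed: "x \<in> S \<Longrightarrow> y \<in> S \<Longrightarrow> z \<in> S \<Longrightarrow> f \<in> carrier (Hm x y) \<Longrightarrow> g \<in> carrier (Hm y z)
   \<Longrightarrow> cmp x y z g f \<in> carrier (Hm x z)"
  using LC by (simp add: linear_category_def)

lemma cmp_left: "x \<in> S \<Longrightarrow> y \<in> S \<Longrightarrow> z \<in> S \<Longrightarrow> f \<in> carrier (Hm x y) \<Longrightarrow> g \<in> carrier (Hm y z)
   \<Longrightarrow> g' \<in> carrier (Hm y z) \<Longrightarrow> cmp x y z (g \<otimes>\<^bsub>Hm y z\<^esub> g') f = cmp x y z g f \<otimes>\<^bsub>Hm x z\<^esub> cmp x y z g' f"
  using LC unfolding linear_category_def by blast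

lemma cmp_right: "x \<in> S \<Longrightarrow> y \<in> S \<Longrightarrow> z \<in> S \<Longrightarrow> f \<in> carrier (Hm x y) \<Longrightarrow> f' \<in> carrier (Hm x y) \<Longrightarrow> g \<in> carrier (Hm y z)
   \<Longrightarrow> cmp x y z g (f \<otimes>\<^bsub>Hm x y\<^esub> f') = cmp x y z g f \<otimes>\<^bsub>Hm x z\<^esub> cmp x y z g f'"
  using LC unfolding linear_category_def by blast

lemma face_gen:
  assumes t: "t \<in> hm_gens S Hm n" and j: "1 \<le> j" "j \<le> n"
  shows "hm_face cmp n j t \<in> hm_gens S Hm (n - 1)"
proof -
  obtain xs fs where tt: "t = (xs, fs)" by fastforce
  have L: "length xs = Suc n" "length fs = Suc n" and X: "set xs \<subseteq> S"
    and F: "\<And>k. k < Suc n \<Longrightarrow> fs ! k \<in> carrier (Hm (xs ! k) (xs ! (Suc k mod Suc n)))"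
    using t tt by (auto simp: hm_gens_def)
  have XS: "\<And>i. i < Suc n \<Longrightarrow> xs ! i \<in> S" using X L by (metis nth_mem subsetD)
  define xs' where "xs' = take j xs @ drop (Suc j) xs"
  define fs' where "fs' = take (j - 1) fs @
        [cmp (xs ! (j - 1)) (xs ! j) (xs ! (Suc j mod Suc n)) (fs ! j) (fs ! (j - 1))] @
        drop (Suc j) fs"
  have ht: "hm_face cmp n j t = (xs', fs')" by (simp add: tt hm_face_def xs'_def fs'_def)
  have L': "length xs' = n" "length fs' = n" using L j by (auto simp: xs'_def fs'_def)
  have X': "set xs' \<subseteq> S" using X by (auto simp: xs'_def dest: in_set_takeD in_set_dropD)
  have xs'n: "\<And>i. i < n \<Longrightarrow> xs' ! i = (if i < j then xs ! i else xs ! Suc i)"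
    using L j by (auto simp: xs'_def nth_append)
  have "fs' ! k \<in> carrier (Hm (xs' ! k) (xs' ! (Suc k mod n)))" if k: "k < n" for k
  proof -
    consider "k < j - 1" | "k = j - 1" | "j - 1 < k" by linarith
    then show ?thesis
    proof cases
      case 1
      then have "fs' ! k = fs ! k" using L j by (auto simp: fs'_def nth_append)
      moreover have "Suc k mod n = Suc k" "Suc k mod Suc n = Suc k" using 1 j by auto
      moreover have "xs' ! Suc k = xs ! Suc k" "xs' ! k = xs ! k" using 1 j xs'n[of "Suc k"] xs'n[of k] by auto
      ultimately show ?thesis using F[of k] 1 k by auto
    next
      case 2
      then have "fs' ! k = cmp (xs ! (j - 1)) (xs ! j) (xs ! (Suc j mod Suc n)) (fs ! j) (fs ! (j - 1))"
        using L j by (auto simp: fs'_def nth_append)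
      moreover have "xs' ! (Suc k mod n) = xs ! (Suc j mod Suc n)"
      proof (cases "j = n")
        case True then show ?thesis using 2 j xs'n by auto
      next
        case False then show ?thesis using 2 j xs'n by auto
      qed
      moreover have "xs' ! k = xs ! (j - 1)" using 2 j xs'n by auto
      moreover have "fs ! (j - 1) \<in> carrier (Hm (xs ! (j - 1)) (xs ! j))"
        using F[of "j - 1"] j by auto
      moreover have "fs ! j \<in> carrier (Hm (xs ! j) (xs ! (Suc j mod Suc n)))"
        using F[of j] j by auto
      moreover have "xs ! (j - 1) \<in> S" "xs ! j \<in> S" "xs ! (Suc j mod Suc n) \<in> S"
        using XS j by auto
      ultimately show ?thesis by (simp add: cmp_closed)
    next
      case 3
      then have "fs' ! k = fs ! Suc k" using L j k by (auto simp: fs'_def nth_append)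
      moreover have "xs' ! k = xs ! Suc k" using 3 xs'n k by auto
      moreover have "xs' ! (Suc k mod n) = xs ! (Suc (Suc k) mod Suc n)"
      proof (cases "Suc k = n")
        case True then show ?thesis using 3 j xs'n by auto
      next
        case False then show ?thesis using 3 j k xs'n by auto
      qed
      ultimately show ?thesis using F[of "Suc k"] k by auto
    qed
  qed
  then show ?thesis using ht L' X' j by (auto simp: hm_gens_def)
qed

lemma last_gen:
  assumes t: "t \<in> hm_gens S Hm n" and n: "1 \<le> n"
  shows "hm_lastface cmp n t \<in> hm_gens S Hm (n - 1)"
proof -
  obtain xs fs where tt: "t = (xs, fs)" by fastforce
  have L: "length xs = Suc n" "length fs = Suc n" and X: "set xs \<subseteq> S"
    and F: "\<And>k. k < Suc n \<Longrightarrow> fs ! k \<in> carrier (Hm (xs ! k) (xs ! (Suc k mod Suc n)))"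
    using t tt by (auto simp: hm_gens_def)
  have XS: "\<And>i. i < Suc n \<Longrightarrow> xs ! i \<in> S" using X L by (metis nth_mem subsetD)
  define xs' where "xs' = tl xs"
  define fs' where "fs' = take (n - 1) (tl fs) @ [cmp (xs ! n) (xs ! 0) (xs ! 1) (fs ! 0) (fs ! n)]"
  have ht: "hm_lastface cmp n t = (xs', fs')" by (simp add: tt hm_lastface_def xs'_def fs'_def)
  have L': "length xs' = n" "length fs' = n" using L n by (auto simp: xs'_def fs'_def)
  have X': "set xs' \<subseteq> S" using X L by (cases xs) (auto simp: xs'_def)
  have xs'n: "\<And>i. i < n \<Longrightarrow> xs' ! i = xs ! Suc i"
    using L by (auto simp: xs'_def nth_tl)
  have "fs' ! k \<in> carrier (Hm (xs' ! k) (xs' ! (Suc k mod n)))" if k: "k < n" for k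
  proof (cases "k = n - 1")
    case True
    then have "fs' ! k = cmp (xs ! n) (xs ! 0) (xs ! 1) (fs ! 0) (fs ! n)"
      using L n by (auto simp: fs'_def nth_append)
    moreover have "xs' ! k = xs ! n" "xs' ! (Suc k mod n) = xs ! 1" using True n xs'n by auto
    moreover have "fs ! n \<in> carrier (Hm (xs ! n) (xs ! 0))" using F[of n] by simp
    moreover have "fs ! 0 \<in> carrier (Hm (xs ! 0) (xs ! 1))" using F[of 0] n by simp
    ultimately show ?thesis using XS n by (simp add: cmp_closed)
  next
    case False
    then have "fs' ! k = fs ! Suc k" using L n k by (auto simp: fs'_def nth_append nth_tl)
    moreover have "xs' ! k = xs ! Suc k" "xs' ! (Suc k mod n) = xs ! (Suc (Suc k) mod Suc n)"
      using False k xs'n by auto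
    ultimately show ?thesis using F[of "Suc k"] k by auto
  qed
  then show ?thesis using ht L' X' n by (auto simp: hm_gens_def)
qed

end

lemma fst_face_nth:
  "length xs = Suc n \<Longrightarrow> 1 \<le> j \<Longrightarrow> j \<le> n \<Longrightarrow> i < n \<Longrightarrow>
   fst (hm_face cmp n j (xs, fs)) ! i = (if i < j then xs ! i else xs ! Suc i)"
  by (auto simp: hm_face_def nth_append)

lemma fst_last_nth:
  "length xs = Suc n \<Longrightarrow> i < n \<Longrightarrow> fst (hm_lastface cmp n (xs, fs)) ! i = xs ! Suc i"
  by (auto simp: hm_lastface_def nth_tl)

context lc begin

lemma triple_R:
  assumes "(xs, fs) \<in> hm_gens S Hm m" "k < Suc m"
    "H = Hm (xs ! k) (xs ! (Suc k mod Suc m))" "a \<in> carrier H" "b \<in> carrier H" "p = a \<otimes>\<^bsub>H\<^esub> b"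
  shows "frag_of (xs, fs[k := p]) - frag_of (xs, fs[k := a]) - frag_of (xs, fs[k := b]) \<in> zspan (hm_rels S Hm m)"
  apply (rule zspan.gen)
  unfolding hm_rels_def using assms by blast

lemma gen_parts:
  assumes "(xs, fs) \<in> hm_gens S Hm n"
  shows "length xs = Suc n" "length fs = Suc n" "\<And>i. i < Suc n \<Longrightarrow> xs ! i \<in> S"
    "\<And>k. k < Suc n \<Longrightarrow> fs ! k \<in> carrier (Hm (xs ! k) (xs ! (Suc k mod Suc n)))"
  using assms by (auto simp: hm_gens_def dest!: nth_mem)

lemma face_triple:
  assumes t: "(xs, fs) \<in> hm_gens S Hm n" and j: "1 \<le> j" "j \<le> n" and k: "k < Suc n"
    and ab: "a \<in> carrier (Hm (xs ! k) (xs ! (Suc k mod Suc n)))" "b \<in> carrier (Hm (xs ! k) (xs ! (Suc k mod Suc n)))"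
  shows "frag_of (hm_face cmp n j (xs, fs[k := a \<otimes>\<^bsub>Hm (xs ! k) (xs ! (Suc k mod Suc n))\<^esub> b]))
       - frag_of (hm_face cmp n j (xs, fs[k := a])) - frag_of (hm_face cmp n j (xs, fs[k := b]))
       \<in> zspan (hm_rels S Hm (n - 1))"
proof -
  note P = gen_parts[OF t]
  obtain xs' fs' where fe: "hm_face cmp n j (xs, fs) = (xs', fs')" by fastforce
  have g': "(xs', fs') \<in> hm_gens S Hm (n - 1)" using face_gen[OF t j] fe by simp
  have sn: "Suc (n - 1) = n" using j by simp
  have x': "\<And>i. i < n \<Longrightarrow> xs' ! i = (if i < j then xs ! i else xs ! Suc i)"
    using fst_face_nth[OF P(1) j, of _ cmp fs] fe by simp
  define H where "H = Hm (xs ! k) (xs ! (Suc k mod Suc n))"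
  consider "k < j - 1" | "k = j - 1" | "k = j" | "j < k" by linarith
  then show ?thesis
  proof cases
    case 1
    have e: "\<And>v. hm_face cmp n j (xs, fs[k:=v]) = (xs', fs'[k := v])"
      using face_upd_lt[OF 1 j(2) P(2), where cmp=cmp and xs=xs] fe by simp
    have "H = Hm (xs' ! k) (xs' ! (Suc k mod Suc (n - 1)))"
      using 1 j x'[of k] x'[of "Suc k"] by (simp add: H_def sn)
    then show ?thesis unfolding e H_def[symmetric]
      using 1 j ab g' by (intro triple_R[where H=H]) (auto simp: H_def)
  next
    case 4
    have e: "\<And>v. hm_face cmp n j (xs, fs[k:=v]) = (xs', fs'[k - 1 := v])"
      using face_upd_gt[OF 4 _ P(2) j(1), where cmp=cmp and xs=xs] k fe by simp
    have "H = Hm (xs' ! (k - 1)) (xs' ! (Suc (k - 1) mod Suc (n - 1)))"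
    proof (cases "k = n")
      case True
      then show ?thesis using 4 j x'[of "k - 1"] x'[of 0] by (simp add: H_def sn)
    next
      case False
      then show ?thesis using 4 j k x'[of "k - 1"] x'[of k] by (simp add: H_def sn)
    qed
    then show ?thesis unfolding e H_def[symmetric]
      using 4 j k ab g' by (intro triple_R[where H=H]) (auto simp: H_def)
  next
    case 2
    define G where "G = Hm (xs ! (j - 1)) (xs ! (Suc j mod Suc n))"
    define g where "g = (\<lambda>v. cmp (xs ! (j - 1)) (xs ! j) (xs ! (Suc j mod Suc n)) (fs ! j) v)"
    have e: "\<And>v. hm_face cmp n j (xs, fs[k:=v]) = (xs', fs'[j - 1 := g v])"
      using face_upd_jm1[OF j P(2), where cmp=cmp and xs=xs] fe 2 by (simp add: g_def)
    have HH: "H = Hm (xs ! (j - 1)) (xs ! j)" using 2 j by (simp add: H_def)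
    have G': "G = Hm (xs' ! (j - 1)) (xs' ! (Suc (j - 1) mod Suc (n - 1)))"
    proof (cases "j = n")
      case True
      then show ?thesis using j x'[of "j - 1"] x'[of 0] by (simp add: G_def sn)
    next
      case False
      then show ?thesis using j x'[of "j - 1"] x'[of j] by (simp add: G_def sn)
    qed
    have objs: "xs ! (j - 1) \<in> S" "xs ! j \<in> S" "xs ! (Suc j mod Suc n) \<in> S"
      using P(3) j by auto
    have fj: "fs ! j \<in> carrier (Hm (xs ! j) (xs ! (Suc j mod Suc n)))" using P(4)[of j] j by simp
    have ab': "a \<in> carrier (Hm (xs ! (j - 1)) (xs ! j))" "b \<in> carrier (Hm (xs ! (j - 1)) (xs ! j))"
      using ab HH H_def by auto
    have cl: "g a \<in> carrier G" "g b \<in> carrier G"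
      using ab' objs fj by (auto simp: g_def G_def cmp_closed)
    have "g (a \<otimes>\<^bsub>H\<^esub> b) = g a \<otimes>\<^bsub>G\<^esub> g b"
      using ab' objs fj by (simp add: HH g_def G_def cmp_right)
    then show ?thesis unfolding e H_def[symmetric]
      using j g' cl G' by (intro triple_R[where H=G]) auto
  next
    case 3
    define G where "G = Hm (xs ! (j - 1)) (xs ! (Suc j mod Suc n))"
    define g where "g = (\<lambda>v. cmp (xs ! (j - 1)) (xs ! j) (xs ! (Suc j mod Suc n)) v (fs ! (j - 1)))"
    have e: "\<And>v. hm_face cmp n j (xs, fs[k:=v]) = (xs', fs'[j - 1 := g v])"
      using face_upd_j[OF j P(2), where cmp=cmp and xs=xs] fe 3 by (simp add: g_def)
    have HH: "H = Hm (xs ! j) (xs ! (Suc j mod Suc n))" using 3 j by (simp add: H_def)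
    have G': "G = Hm (xs' ! (j - 1)) (xs' ! (Suc (j - 1) mod Suc (n - 1)))"
    proof (cases "j = n")
      case True
      then show ?thesis using j x'[of "j - 1"] x'[of 0] by (simp add: G_def sn)
    next
      case False
      then show ?thesis using j x'[of "j - 1"] x'[of j] by (simp add: G_def sn)
    qed
    have objs: "xs ! (j - 1) \<in> S" "xs ! j \<in> S" "xs ! (Suc j mod Suc n) \<in> S"
      using P(3) j by auto
    have fj: "fs ! (j - 1) \<in> carrier (Hm (xs ! (j - 1)) (xs ! j))" using P(4)[of "j - 1"] j by simp
    have ab': "a \<in> carrier (Hm (xs ! j) (xs ! (Suc j mod Suc n)))" "b \<in> carrier (Hm (xs ! j) (xs ! (Suc j mod Suc n)))"
      using ab HH H_def by auto
    have cl: "g a \<in> carrier G" "g b \<in> carrier G"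
      using ab' objs fj by (auto simp: g_def G_def cmp_closed)
    have "g (a \<otimes>\<^bsub>H\<^esub> b) = g a \<otimes>\<^bsub>G\<^esub> g b"
      using ab' objs fj by (simp add: HH g_def G_def cmp_left)
    then show ?thesis unfolding e H_def[symmetric]
      using j g' cl G' by (intro triple_R[where H=G]) auto
  qed
qed

end

context lc begin

lemma last_triple:
  assumes t: "(xs, fs) \<in> hm_gens S Hm n" and n: "1 \<le> n" and k: "k < Suc n"
    and ab: "a \<in> carrier (Hm (xs ! k) (xs ! (Suc k mod Suc n)))" "b \<in> carrier (Hm (xs ! k) (xs ! (Suc k mod Suc n)))"
  shows "frag_of (hm_lastface cmp n (xs, fs[k := a \<otimes>\<^bsub>Hm (xs ! k) (xs ! (Suc k mod Suc n))\<^esub> b]))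
       - frag_of (hm_lastface cmp n (xs, fs[k := a])) - frag_of (hm_lastface cmp n (xs, fs[k := b]))
       \<in> zspan (hm_rels S Hm (n - 1))"
proof -
  note P = gen_parts[OF t]
  obtain xs' fs' where fe: "hm_lastface cmp n (xs, fs) = (xs', fs')" by fastforce
  have g': "(xs', fs') \<in> hm_gens S Hm (n - 1)" using last_gen[OF t n] fe by simp
  have sn: "Suc (n - 1) = n" using n by simp
  have x': "\<And>i. i < n \<Longrightarrow> xs' ! i = xs ! Suc i"
    using fst_last_nth[OF P(1), of _ cmp fs] fe by simp
  define H where "H = Hm (xs ! k) (xs ! (Suc k mod Suc n))"
  define G where "G = Hm (xs ! n) (xs ! 1)"
  have G': "G = Hm (xs' ! (n - 1)) (xs' ! (Suc (n - 1) mod Suc (n - 1)))"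
    using n x'[of "n - 1"] x'[of 0] by (simp add: G_def sn)
  have objs: "xs ! 0 \<in> S" "xs ! 1 \<in> S" "xs ! n \<in> S" using P(3) n by auto
  have f0: "fs ! 0 \<in> carrier (Hm (xs ! 0) (xs ! 1))" using P(4)[of 0] n by simp
  have fn: "fs ! n \<in> carrier (Hm (xs ! n) (xs ! 0))" using P(4)[of n] by simp
  consider "k = 0" | "k = n" | "1 \<le> k" "k < n" using k by linarith
  then show ?thesis
  proof cases
    case 3
    have e: "\<And>v. hm_lastface cmp n (xs, fs[k:=v]) = (xs', fs'[k - 1 := v])"
      using last_upd_mid[OF 3 P(2), where cmp=cmp and xs=xs] fe by simp
    have "H = Hm (xs' ! (k - 1)) (xs' ! (Suc (k - 1) mod Suc (n - 1)))"
      using 3 x'[of "k - 1"] x'[of k] by (simp add: H_def sn)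
    then show ?thesis unfolding e H_def[symmetric]
      using 3 ab g' by (intro triple_R[where H=H]) (auto simp: H_def)
  next
    case 1
    define g where "g = (\<lambda>v. cmp (xs ! n) (xs ! 0) (xs ! 1) v (fs ! n))"
    have e: "\<And>v. hm_lastface cmp n (xs, fs[k:=v]) = (xs', fs'[n - 1 := g v])"
      using last_upd_0[OF n P(2), where cmp=cmp and xs=xs] fe 1 by (simp add: g_def)
    have HH: "H = Hm (xs ! 0) (xs ! 1)" using 1 n by (simp add: H_def)
    have ab': "a \<in> carrier (Hm (xs ! 0) (xs ! 1))" "b \<in> carrier (Hm (xs ! 0) (xs ! 1))"
      using ab HH H_def by auto
    have cl: "g a \<in> carrier G" "g b \<in> carrier G"
      using ab' objs fn by (auto simp: g_def G_def cmp_closed)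
    have "g (a \<otimes>\<^bsub>H\<^esub> b) = g a \<otimes>\<^bsub>G\<^esub> g b"
      using ab' objs fn by (simp add: HH g_def G_def cmp_left)
    then show ?thesis unfolding e H_def[symmetric]
      using n g' cl G' by (intro triple_R[where H=G]) auto
  next
    case 2
    define g where "g = (\<lambda>v. cmp (xs ! n) (xs ! 0) (xs ! 1) (fs ! 0) v)"
    have e: "\<And>v. hm_lastface cmp n (xs, fs[k:=v]) = (xs', fs'[n - 1 := g v])"
      using last_upd_n[OF n P(2), where cmp=cmp and xs=xs] fe 2 by (simp add: g_def)
    have HH: "H = Hm (xs ! n) (xs ! 0)" using 2 n by (simp add: H_def)
    have ab': "a \<in> carrier (Hm (xs ! n) (xs ! 0))" "b \<in> carrier (Hm (xs ! n) (xs ! 0))"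
      using ab HH H_def by auto
    have cl: "g a \<in> carrier G" "g b \<in> carrier G"
      using ab' objs f0 by (auto simp: g_def G_def cmp_closed)
    have "g (a \<otimes>\<^bsub>H\<^esub> b) = g a \<otimes>\<^bsub>G\<^esub> g b"
      using ab' objs f0 by (simp add: HH g_def G_def cmp_right)
    then show ?thesis unfolding e H_def[symmetric]
      using n g' cl G' by (intro triple_R[where H=G]) auto
  qed
qed

lemma frag_cmul_diff2: "frag_cmul c (a - b) = frag_cmul c a - frag_cmul c b"
  by (rule poly_mapping_eqI) (simp add: lookup_minus algebra_simps)

lemma zspan_cmul: "a \<in> zspan H \<Longrightarrow> frag_cmul c a \<in> zspan H"
  by (rule frag_closure_minus_cmul) (auto intro: zspan.intros)

lemma bd_rel:
  assumes n: "1 \<le> n" and r: "r \<in> hm_rels S Hm n"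
  shows "frag_extend (hm_bd_gen cmp n) r \<in> zspan (hm_rels S Hm (n - 1))"
proof -
  obtain xs fs k a b where t: "(xs, fs) \<in> hm_gens S Hm n" and k: "k < Suc n"
    and ab: "a \<in> carrier (Hm (xs ! k) (xs ! (Suc k mod Suc n)))" "b \<in> carrier (Hm (xs ! k) (xs ! (Suc k mod Suc n)))"
    and req: "r = frag_of (xs, fs[k := a \<otimes>\<^bsub>Hm (xs ! k) (xs ! (Suc k mod Suc n))\<^esub> b])
       - frag_of (xs, fs[k := a]) - frag_of (xs, fs[k := b])"
    using r unfolding hm_rels_def by blast
  define p where "p = a \<otimes>\<^bsub>Hm (xs ! k) (xs ! (Suc k mod Suc n))\<^esub> b"
  let ?A = "(xs, fs[k := p])" and ?B = "(xs, fs[k := a])" and ?C = "(xs, fs[k := b])"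
  have "frag_extend (hm_bd_gen cmp n) r = hm_bd_gen cmp n ?A - hm_bd_gen cmp n ?B - hm_bd_gen cmp n ?C"
    by (simp add: req p_def frag_extend_diff)
  also have "\<dots> = (\<Sum>i<n. frag_cmul ((-1) ^ i)
        (frag_of (hm_face cmp n (n - i) ?A) - frag_of (hm_face cmp n (n - i) ?B) - frag_of (hm_face cmp n (n - i) ?C)))
      + frag_cmul ((-1) ^ n) (frag_of (hm_lastface cmp n ?A) - frag_of (hm_lastface cmp n ?B) - frag_of (hm_lastface cmp n ?C))"
    unfolding hm_bd_gen_def frag_cmul_diff2 sum_subtractf by (simp add: algebra_simps)
  also have "\<dots> \<in> zspan (hm_rels S Hm (n - 1))"
  proof (rule zspan_add)
    show "(\<Sum>i<n. frag_cmul ((-1) ^ i)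
        (frag_of (hm_face cmp n (n - i) ?A) - frag_of (hm_face cmp n (n - i) ?B) - frag_of (hm_face cmp n (n - i) ?C)))
      \<in> zspan (hm_rels S Hm (n - 1))"
      using face_triple[OF t _ _ k ab] by (auto intro!: zspan_sum zspan_cmul simp: p_def)
    show "frag_cmul ((-1) ^ n) (frag_of (hm_lastface cmp n ?A) - frag_of (hm_lastface cmp n ?B) - frag_of (hm_lastface cmp n ?C))
      \<in> zspan (hm_rels S Hm (n - 1))"
      using last_triple[OF t n k ab] by (auto intro!: zspan_cmul simp: p_def)
  qed
  finally show ?thesis .
qed

end

lemma comm_group_from_frags:
  fixes M :: "('b, 'c) monoid_scheme"
  assumes Z0: "0 \<in> Z" and Zadd: "\<And>a b. a \<in> Z \<Longrightarrow> b \<in> Z \<Longrightarrow> a + b \<in> Z"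
    and Zneg: "\<And>a. a \<in> Z \<Longrightarrow> - a \<in> Z"
    and car: "carrier M = q ` Z"
    and mult: "\<And>a b. a \<in> Z \<Longrightarrow> b \<in> Z \<Longrightarrow> q a \<otimes>\<^bsub>M\<^esub> q b = q (a + b)"
    and one: "\<one>\<^bsub>M\<^esub> = q (0 :: 'a \<Rightarrow>\<^sub>0 int)"
  shows "comm_group M"
proof (rule comm_groupI)
  fix x y z assume x: "x \<in> carrier M" and y: "y \<in> carrier M" and z: "z \<in> carrier M"
  obtain a b c where a: "a \<in> Z" "x = q a" and b: "b \<in> Z" "y = q b" and c: "c \<in> Z" "z = q c"
    using x y z car by auto
  show "x \<otimes>\<^bsub>M\<^esub> y \<in> carrier M" using a b by (simp add: mult car Zadd)
  show "x \<otimes>\<^bsub>M\<^esub> y \<otimes>\<^bsub>M\<^esub> z = x \<otimes>\<^bsub>M\<^esub> (y \<otimes>\<^bsub>M\<^esub> z)"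
    using a b c by (simp add: mult Zadd add.assoc)
  show "x \<otimes>\<^bsub>M\<^esub> y = y \<otimes>\<^bsub>M\<^esub> x" using a b by (simp add: mult add.commute)
  show "\<one>\<^bsub>M\<^esub> \<otimes>\<^bsub>M\<^esub> x = x" using a by (simp add: one mult Z0)
  show "\<exists>y\<in>carrier M. y \<otimes>\<^bsub>M\<^esub> x = \<one>\<^bsub>M\<^esub>"
    using a by (intro bexI[of _ "q (- a)"]) (auto simp: one mult Zneg car)
next
  show "\<one>\<^bsub>M\<^esub> \<in> carrier M" using car one Z0 by simp
qed

definition "Rr S Hm n = zspan (hm_rels S Hm n)"
definition "bdd cmp n = frag_extend (hm_bd_gen cmp n)"
definition "rc R a = (\<lambda>r. r + a) ` R"
definition "Fc S Hm n = {c. Poly_Mapping.keys c \<subseteq> hm_gens S Hm n}"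
definition "Zt S Hm cmp n = {c. Poly_Mapping.keys c \<subseteq> hm_gens S Hm n \<and> (n = 0 \<or> bdd cmp n c \<in> Rr S Hm (n - 1))}"
definition "Bt S Hm cmp n = {bdd cmp (Suc n) e + r | e r. Poly_Mapping.keys e \<subseteq> hm_gens S Hm (Suc n) \<and> r \<in> Rr S Hm n}"
definition "qq S Hm cmp n c = {rc (Rr S Hm n) (bdd cmp (Suc n) e + c) | e. Poly_Mapping.keys e \<subseteq> hm_gens S Hm (Suc n)}"

lemma rcos_free: "r_coset (free_Abelian_group T) R a = rc R a"
  by (auto simp: r_coset_def rc_def)

lemma rc_eq: "rc (zspan H) a = rc (zspan H) b \<longleftrightarrow> a - b \<in> zspan H"
proof
  assume "rc (zspan H) a = rc (zspan H) b"
  then have "a \<in> rc (zspan H) b" by (metis add_0 image_eqI rc_def zspan.zero)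
  then obtain r where "r \<in> zspan H" "a = r + b" by (auto simp: rc_def)
  then show "a - b \<in> zspan H" by simp
next
  assume d: "a - b \<in> zspan H"
  show "rc (zspan H) a = rc (zspan H) b"
  proof (auto simp: rc_def)
    fix r assume "r \<in> zspan H"
    then show "r + a \<in> (\<lambda>r. r + b) ` zspan H"
      using d by (intro image_eqI[of _ _ "r + (a - b)"]) (auto intro: zspan_add)
  next
    fix r assume "r \<in> zspan H"
    then show "r + b \<in> (\<lambda>r. r + a) ` zspan H"
      using d by (intro image_eqI[of _ _ "r - (a - b)"]) (auto intro: zspan.diff)
  qed
qed

lemma rc_mult: "set_mult (free_Abelian_group T) (rc (zspan H) a) (rc (zspan H) b) = rc (zspan H) (a + b)"
proof -
  have "x \<in> set_mult (free_Abelian_group T) (rc (zspan H) a) (rc (zspan H) b) \<longleftrightarrow> x \<in> rc (zspan H) (a + b)" for x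
  proof
    assume "x \<in> set_mult (free_Abelian_group T) (rc (zspan H) a) (rc (zspan H) b)"
    then obtain r s where "r \<in> zspan H" "s \<in> zspan H" "x = (r + a) + (s + b)"
      by (auto simp: set_mult_def rc_def)
    then show "x \<in> rc (zspan H) (a + b)"
      unfolding rc_def by (intro image_eqI[of _ _ "r + s"]) (auto intro: zspan_add)
  next
    assume "x \<in> rc (zspan H) (a + b)"
    then obtain r where r: "r \<in> zspan H" "x = r + (a + b)" by (auto simp: rc_def)
    have "r + a \<in> rc (zspan H) a" using r by (auto simp: rc_def)
    have "b \<in> rc (zspan H) b" unfolding rc_def by (rule image_eqI[of _ _ 0]) (auto intro: zspan.zero)
    then show "x \<in> set_mult (free_Abelian_group T) (rc (zspan H) a) (rc (zspan H) b)"
    proof -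
      have "x = (r + a) \<otimes>\<^bsub>free_Abelian_group T\<^esub> b" using r by (simp add: add.assoc)
      then show ?thesis
      unfolding set_mult_def using \<open>r + a \<in> rc (zspan H) a\<close> \<open>b \<in> rc (zspan H) b\<close> by blast
    qed
  qed
  then show ?thesis by blast
qed

context lc begin

lemma rels_keys: "h \<in> hm_rels S Hm n \<Longrightarrow> Poly_Mapping.keys h \<subseteq> hm_gens S Hm n"
proof -
  assume "h \<in> hm_rels S Hm n"
  then obtain xs fs k a b where t: "(xs, fs) \<in> hm_gens S Hm n" and k: "k < Suc n"
    and ab: "a \<in> carrier (Hm (xs ! k) (xs ! (Suc k mod Suc n)))" "b \<in> carrier (Hm (xs ! k) (xs ! (Suc k mod Suc n)))"
    and req: "h = frag_of (xs, fs[k := a \<otimes>\<^bsub>Hm (xs ! k) (xs ! (Suc k mod Suc n))\<^esub> b])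
       - frag_of (xs, fs[k := a]) - frag_of (xs, fs[k := b])"
    unfolding hm_rels_def by blast
  note P = gen_parts[OF t]
  have G: "comm_group (Hm (xs ! k) (xs ! (Suc k mod Suc n)))" using P(3) k by (simp add: grp)
  have "(xs, fs[k := v]) \<in> hm_gens S Hm n" if "v \<in> carrier (Hm (xs ! k) (xs ! (Suc k mod Suc n)))" for v
    using t that k by (auto simp: hm_gens_def nth_list_update)
  then have "(xs, fs[k := a \<otimes>\<^bsub>Hm (xs ! k) (xs ! (Suc k mod Suc n))\<^esub> b]) \<in> hm_gens S Hm n"
     "(xs, fs[k := a]) \<in> hm_gens S Hm n" "(xs, fs[k := b]) \<in> hm_gens S Hm n"
    using ab G by (auto intro: comm_groupE(1))
  then show ?thesis using req by (auto simp: keys_frag_of dest!: subsetD[OF keys_diff])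
qed

lemma Rr_keys: "r \<in> Rr S Hm n \<Longrightarrow> Poly_Mapping.keys r \<subseteq> hm_gens S Hm n"
  unfolding Rr_def using zspan_keys rels_keys by blast

lemma generate_Rr: "generate (hm_free S Hm n) (hm_rels S Hm n) = Rr S Hm n"
  unfolding hm_free_def Rr_def by (rule generate_free_zspan) (rule rels_keys)

lemma bd_Rr: "1 \<le> n \<Longrightarrow> r \<in> Rr S Hm n \<Longrightarrow> bdd cmp n r \<in> Rr S Hm (n - 1)"
  unfolding Rr_def bdd_def using zspan_frag_extend bd_rel by blast

lemma bd_gen_keys: "1 \<le> n \<Longrightarrow> t \<in> hm_gens S Hm n \<Longrightarrow> Poly_Mapping.keys (hm_bd_gen cmp n t) \<subseteq> hm_gens S Hm (n - 1)"
proof -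
  assume n: "1 \<le> n" and t: "t \<in> hm_gens S Hm n"
  have "Poly_Mapping.keys (frag_cmul ((-1) ^ i) (frag_of (hm_face cmp n (n - i) t))) \<subseteq> hm_gens S Hm (n - 1)"
    if "i < n" for i
    using face_gen[OF t, of "n - i"] that by (auto simp: keys_frag_of dest!: subsetD[OF keys_cmul])
  then have "Poly_Mapping.keys (\<Sum>i<n. frag_cmul ((-1) ^ i) (frag_of (hm_face cmp n (n - i) t))) \<subseteq> hm_gens S Hm (n - 1)"
    by (meson carrier_free_Abelian_group_iff lessThan_iff sum_closed_free_Abelian_group)
  moreover have "Poly_Mapping.keys (frag_cmul ((-1) ^ n) (frag_of (hm_lastface cmp n t))) \<subseteq> hm_gens S Hm (n - 1)"
    using last_gen[OF t n] by (auto simp: keys_frag_of dest!: subsetD[OF keys_cmul])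
  ultimately show ?thesis unfolding hm_bd_gen_def by (auto dest!: subsetD[OF keys_add])
qed

lemma bd_keys: "1 \<le> n \<Longrightarrow> Poly_Mapping.keys c \<subseteq> hm_gens S Hm n \<Longrightarrow> Poly_Mapping.keys (bdd cmp n c) \<subseteq> hm_gens S Hm (n - 1)"
  unfolding bdd_def using keys_frag_extend bd_gen_keys by fastforce

end

lemma bdd_add: "bdd cmp n (a + b) = bdd cmp n a + bdd cmp n b"
  by (simp add: bdd_def frag_extend_add)
lemma bdd_diff: "bdd cmp n (a - b) = bdd cmp n a - bdd cmp n b"
  by (simp add: bdd_def frag_extend_diff)
lemma bdd_0: "bdd cmp n 0 = 0"
  by (simp add: bdd_def)
lemma bdd_minus: "bdd cmp n (- a) = - bdd cmp n a"
  by (simp add: bdd_def frag_extend_minus)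

context lc begin

lemma chains_eq: "hm_chains S Hm n = hm_free S Hm n Mod Rr S Hm n"
  by (simp add: hm_chains_def generate_Rr)

lemma carrier_chains: "carrier (hm_chains S Hm n) = rc (Rr S Hm n) ` Fc S Hm n"
  by (auto simp: chains_eq carrier_FactGroup hm_free_def rcos_free Fc_def)

lemma mult_chains: "monoid.mult (hm_chains S Hm n) = set_mult (hm_free S Hm n)"
  by (simp add: chains_eq)

lemma one_chains: "one (hm_chains S Hm n) = Rr S Hm n"
  by (simp add: chains_eq)

lemma rc_0: "rc (Rr S Hm n) 0 = Rr S Hm n"
  by (simp add: rc_def)

lemma rc_eqR: "rc (Rr S Hm n) a = rc (Rr S Hm n) b \<longleftrightarrow> a - b \<in> Rr S Hm n"
  unfolding Rr_def by (rule rc_eq)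

lemma hm_d_rc:
  assumes n: "1 \<le> n"
  shows "hm_d S Hm cmp n (rc (Rr S Hm n) c) = rc (Rr S Hm (n - 1)) (bdd cmp n c)"
proof -
  have "generate (hm_free S Hm (n - 1)) (hm_rels S Hm (n - 1)) #>\<^bsub>hm_free S Hm (n - 1)\<^esub> frag_extend (hm_bd_gen cmp n) c'
     = rc (Rr S Hm (n - 1)) (bdd cmp n c)" if hyp: "c' \<in> rc (Rr S Hm n) c" for c'
  proof -
    obtain r where r: "r \<in> Rr S Hm n" "c' = r + c" using hyp unfolding rc_def by blast
    have "bdd cmp n c' - bdd cmp n c \<in> Rr S Hm (n - 1)"
      using r bd_Rr[OF n] by (simp add: bdd_add)
    then show ?thesis
      unfolding generate_Rr by (simp add: hm_free_def rcos_free rc_eqR flip: bdd_def)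
  qed
  moreover have "c \<in> rc (Rr S Hm n) c"
    unfolding rc_def Rr_def by (rule image_eqI[of _ _ 0]) (auto intro: zspan.zero)
  ultimately show ?thesis unfolding hm_d_def by blast
qed

lemma Zt_sub: "Zt S Hm cmp n \<subseteq> Fc S Hm n"
  by (auto simp: Zt_def Fc_def)

lemma cycles_eq: "hm_cycles S Hm cmp n = rc (Rr S Hm n) ` Zt S Hm cmp n"
proof (cases "n = 0")
  case True
  then show ?thesis by (simp add: hm_cycles_def carrier_chains Zt_def Fc_def)
next
  case False
  then have n: "1 \<le> n" by simp
  have "z \<in> kernel (hm_chains S Hm n) (hm_chains S Hm (n - 1)) (hm_d S Hm cmp n) \<longleftrightarrow>
        z \<in> rc (Rr S Hm n) ` Zt S Hm cmp n" for z
  proof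
    assume "z \<in> kernel (hm_chains S Hm n) (hm_chains S Hm (n - 1)) (hm_d S Hm cmp n)"
    then obtain c where c: "c \<in> Fc S Hm n" "z = rc (Rr S Hm n) c"
      and e: "hm_d S Hm cmp n z = Rr S Hm (n - 1)"
      by (auto simp: kernel_def carrier_chains one_chains)
    then have "rc (Rr S Hm (n - 1)) (bdd cmp n c) = rc (Rr S Hm (n - 1)) 0"
      by (simp add: hm_d_rc[OF n] rc_0)
    then have "bdd cmp n c \<in> Rr S Hm (n - 1)" by (simp add: rc_eqR)
    then show "z \<in> rc (Rr S Hm n) ` Zt S Hm cmp n" using c by (auto simp: Zt_def Fc_def)
  next
    assume "z \<in> rc (Rr S Hm n) ` Zt S Hm cmp n"
    then obtain c where c: "c \<in> Zt S Hm cmp n" "z = rc (Rr S Hm n) c" by auto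
    then have "bdd cmp n c \<in> Rr S Hm (n - 1)" using False by (simp add: Zt_def)
    then have "hm_d S Hm cmp n z = rc (Rr S Hm (n - 1)) 0"
      using c by (simp add: hm_d_rc[OF n] rc_eqR)
    then show "z \<in> kernel (hm_chains S Hm n) (hm_chains S Hm (n - 1)) (hm_d S Hm cmp n)"
      using c Zt_sub by (auto simp: kernel_def carrier_chains one_chains rc_0)
  qed
  then show ?thesis using False by (auto simp: hm_cycles_def)
qed

lemma B_eq: "hm_d S Hm cmp (Suc n) ` carrier (hm_chains S Hm (Suc n))
   = (\<lambda>e. rc (Rr S Hm n) (bdd cmp (Suc n) e)) ` Fc S Hm (Suc n)"
  using hm_d_rc[of "Suc n"] by (auto simp: carrier_chains)

lemma qq_coset: "r_coset (hm_chains S Hm n) (hm_d S Hm cmp (Suc n) ` carrier (hm_chains S Hm (Suc n))) (rc (Rr S Hm n) c)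
   = qq S Hm cmp n c"
  unfolding B_eq r_coset_def mult_chains qq_def
  by (auto simp: hm_free_def Rr_def rc_mult Fc_def)

lemma qq_mult: "set_mult (hm_chains S Hm n) (qq S Hm cmp n a) (qq S Hm cmp n b) = qq S Hm cmp n (a + b)"
proof -
  let ?R = "Rr S Hm n"
  have "set_mult (hm_chains S Hm n) (qq S Hm cmp n a) (qq S Hm cmp n b) =
    (\<Union>X\<in>qq S Hm cmp n a. \<Union>Y\<in>qq S Hm cmp n b. {set_mult (free_Abelian_group (hm_gens S Hm n)) X Y})"
    by (simp add: set_mult_def[of "hm_chains S Hm n"] mult_chains hm_free_def)
  also have "\<dots> = qq S Hm cmp n (a + b)"
  proof (intro equalityI subsetI)
    fix Z assume "Z \<in> (\<Union>X\<in>qq S Hm cmp n a. \<Union>Y\<in>qq S Hm cmp n b. {set_mult (free_Abelian_group (hm_gens S Hm n)) X Y})"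
    then obtain e e' where e: "Poly_Mapping.keys e \<subseteq> hm_gens S Hm (Suc n)" "Poly_Mapping.keys e' \<subseteq> hm_gens S Hm (Suc n)"
      and Z: "Z = set_mult (free_Abelian_group (hm_gens S Hm n)) (rc ?R (bdd cmp (Suc n) e + a)) (rc ?R (bdd cmp (Suc n) e' + b))"
      by (auto simp: qq_def)
    have "Z = rc ?R (bdd cmp (Suc n) (e + e') + (a + b))"
      unfolding Z Rr_def rc_mult by (simp add: bdd_add algebra_simps)
    moreover have "Poly_Mapping.keys (e + e') \<subseteq> hm_gens S Hm (Suc n)"
      using e by (auto dest!: subsetD[OF keys_add])
    ultimately show "Z \<in> qq S Hm cmp n (a + b)" by (auto simp: qq_def)
  next
    fix Z assume "Z \<in> qq S Hm cmp n (a + b)"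
    then obtain e where e: "Poly_Mapping.keys e \<subseteq> hm_gens S Hm (Suc n)"
      and Z: "Z = rc ?R (bdd cmp (Suc n) e + (a + b))" by (auto simp: qq_def)
    have "Z = set_mult (free_Abelian_group (hm_gens S Hm n)) (rc ?R (bdd cmp (Suc n) e + a)) (rc ?R (bdd cmp (Suc n) 0 + b))"
      unfolding Z Rr_def rc_mult by (simp add: bdd_0 algebra_simps)
    moreover have "rc ?R (bdd cmp (Suc n) e + a) \<in> qq S Hm cmp n a" using e by (auto simp: qq_def)
    moreover have "rc ?R (bdd cmp (Suc n) 0 + b) \<in> qq S Hm cmp n b" by (auto simp: qq_def)
    ultimately show "Z \<in> (\<Union>X\<in>qq S Hm cmp n a. \<Union>Y\<in>qq S Hm cmp n b. {set_mult (free_Abelian_group (hm_gens S Hm n)) X Y})"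
      by blast
  qed
  finally show ?thesis .
qed

lemma qq_eq: "qq S Hm cmp n a = qq S Hm cmp n b \<longleftrightarrow> a - b \<in> Bt S Hm cmp n"
proof
  let ?R = "Rr S Hm n"
  assume q: "qq S Hm cmp n a = qq S Hm cmp n b"
  have "rc ?R (bdd cmp (Suc n) 0 + a) \<in> qq S Hm cmp n a" unfolding qq_def by auto
  then have "rc ?R a \<in> qq S Hm cmp n b" using q by (simp add: bdd_0)
  then obtain e where e: "Poly_Mapping.keys e \<subseteq> hm_gens S Hm (Suc n)"
    and "rc ?R a = rc ?R (bdd cmp (Suc n) e + b)" unfolding qq_def by blast
  then have "a - (bdd cmp (Suc n) e + b) \<in> ?R" by (simp add: rc_eqR)
  then have "a - b = bdd cmp (Suc n) e + (a - (bdd cmp (Suc n) e + b))" "a - (bdd cmp (Suc n) e + b) \<in> ?R" by simp_all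
  then show "a - b \<in> Bt S Hm cmp n" using e unfolding Bt_def by blast
next
  let ?R = "Rr S Hm n"
  assume "a - b \<in> Bt S Hm cmp n"
  then obtain e0 r0 where e0: "Poly_Mapping.keys e0 \<subseteq> hm_gens S Hm (Suc n)" and r0: "r0 \<in> ?R"
    and ab: "a - b = bdd cmp (Suc n) e0 + r0" by (auto simp: Bt_def)
  have "X \<in> qq S Hm cmp n b" if hyp: "X \<in> qq S Hm cmp n a" for X
  proof -
    obtain e where e: "Poly_Mapping.keys e \<subseteq> hm_gens S Hm (Suc n)" and X: "X = rc ?R (bdd cmp (Suc n) e + a)"
      using hyp unfolding qq_def by blast
    have "(bdd cmp (Suc n) e + a) - (bdd cmp (Suc n) (e + e0) + b) = r0"
      using ab by (simp add: bdd_add algebra_simps)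
    then have "X = rc ?R (bdd cmp (Suc n) (e + e0) + b)" using X r0 by (simp add: rc_eqR)
    moreover have "Poly_Mapping.keys (e + e0) \<subseteq> hm_gens S Hm (Suc n)"
      using e e0 by (auto dest!: subsetD[OF keys_add])
    ultimately show ?thesis by (auto simp: qq_def)
  qed
  moreover have "X \<in> qq S Hm cmp n a" if hyp: "X \<in> qq S Hm cmp n b" for X
  proof -
    obtain e where e: "Poly_Mapping.keys e \<subseteq> hm_gens S Hm (Suc n)" and X: "X = rc ?R (bdd cmp (Suc n) e + b)"
      using hyp unfolding qq_def by blast
    have "(bdd cmp (Suc n) e + b) - (bdd cmp (Suc n) (e - e0) + a) = - r0"
      using ab by (simp add: bdd_diff algebra_simps)
    moreover have "- r0 \<in> ?R" using r0 by (simp add: Rr_def zspan_uminus)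
    ultimately have "X = rc ?R (bdd cmp (Suc n) (e - e0) + a)" using X by (simp add: rc_eqR)
    moreover have "Poly_Mapping.keys (e - e0) \<subseteq> hm_gens S Hm (Suc n)"
      using e e0 by (auto dest!: subsetD[OF keys_diff])
    ultimately show ?thesis by (auto simp: qq_def)
  qed
  ultimately show "qq S Hm cmp n a = qq S Hm cmp n b" by blast
qed

lemma HH_carrier: "carrier (HH S Hm cmp n) = qq S Hm cmp n ` Zt S Hm cmp n"
  unfolding HH_def by (auto simp: FactGroup_def RCOSETS_def cycles_eq qq_coset[symmetric] r_coset_def)

lemma HH_mult: "qq S Hm cmp n a \<otimes>\<^bsub>HH S Hm cmp n\<^esub> qq S Hm cmp n b = qq S Hm cmp n (a + b)"
  unfolding HH_def by (simp add: FactGroup_def set_mult_def[of "hm_chains S Hm n\<lparr>carrier := hm_cycles S Hm cmp n\<rparr>"]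
     flip: qq_mult)

end

definition "Zg S Hm cmp n = (hm_free S Hm n)\<lparr>carrier := Zt S Hm cmp n\<rparr>"

context lc begin

lemma Rr_0: "0 \<in> Rr S Hm n" by (simp add: Rr_def zspan.zero)
lemma Rr_add: "a \<in> Rr S Hm n \<Longrightarrow> b \<in> Rr S Hm n \<Longrightarrow> a + b \<in> Rr S Hm n" by (simp add: Rr_def zspan_add)
lemma Rr_diff: "a \<in> Rr S Hm n \<Longrightarrow> b \<in> Rr S Hm n \<Longrightarrow> a - b \<in> Rr S Hm n" by (simp add: Rr_def zspan.diff)
lemma Rr_uminus: "a \<in> Rr S Hm n \<Longrightarrow> - a \<in> Rr S Hm n" by (simp add: Rr_def zspan_uminus)

lemma Zt_0: "0 \<in> Zt S Hm cmp n" by (simp add: Zt_def bdd_0 Rr_0)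
lemma Zt_add: "a \<in> Zt S Hm cmp n \<Longrightarrow> b \<in> Zt S Hm cmp n \<Longrightarrow> a + b \<in> Zt S Hm cmp n"
  by (auto simp: Zt_def bdd_add Rr_add dest!: subsetD[OF keys_add])
lemma Zt_uminus: "a \<in> Zt S Hm cmp n \<Longrightarrow> - a \<in> Zt S Hm cmp n"
  by (auto simp: Zt_def bdd_minus Rr_uminus)

lemma HH_one: "\<one>\<^bsub>HH S Hm cmp n\<^esub> = qq S Hm cmp n 0"
proof -
  have "\<one>\<^bsub>HH S Hm cmp n\<^esub> = hm_d S Hm cmp (Suc n) ` carrier (hm_chains S Hm (Suc n))"
    unfolding HH_def by (simp add: FactGroup_def)
  also have "\<dots> = qq S Hm cmp n 0" unfolding B_eq qq_def Fc_def by auto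
  finally show ?thesis .
qed

lemma comm_group_HH: "comm_group (HH S Hm cmp n)"
  by (rule comm_group_from_frags[where Z="Zt S Hm cmp n" and q="qq S Hm cmp n"])
     (auto simp: Zt_0 Zt_add Zt_uminus HH_carrier HH_mult HH_one)

lemma group_HH: "group (HH S Hm cmp n)"
  using comm_group_HH comm_group.axioms(2) by (metis comm_group_def)

lemma subgroup_Zt: "subgroup (Zt S Hm cmp n) (hm_free S Hm n)"
proof -
  have "group (hm_free S Hm n)" by (simp add: hm_free_def)
  then show ?thesis
  proof (rule group.subgroupI)
    show "Zt S Hm cmp n \<subseteq> carrier (hm_free S Hm n)" by (auto simp: hm_free_def Zt_def)
    show "Zt S Hm cmp n \<noteq> {}" using Zt_0 by blast
    fix a b assume a: "a \<in> Zt S Hm cmp n" and b: "b \<in> Zt S Hm cmp n"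
    have ka: "Poly_Mapping.keys a \<subseteq> hm_gens S Hm n" using a by (simp add: Zt_def)
    show "inv\<^bsub>hm_free S Hm n\<^esub> a \<in> Zt S Hm cmp n" using a ka by (simp add: hm_free_def Zt_uminus)
    show "a \<otimes>\<^bsub>hm_free S Hm n\<^esub> b \<in> Zt S Hm cmp n" using a b by (simp add: hm_free_def Zt_add)
  qed
qed

lemma group_Zg: "group (Zg S Hm cmp n)"
  unfolding Zg_def by (rule group.subgroup_imp_group[OF _ subgroup_Zt]) (simp add: hm_free_def)

lemma qq_hom: "qq S Hm cmp n \<in> hom (Zg S Hm cmp n) (HH S Hm cmp n)"
  by (rule homI) (auto simp: Zg_def HH_carrier HH_mult hm_free_def)

lemma qq_surj: "qq S Hm cmp n ` carrier (Zg S Hm cmp n) = carrier (HH S Hm cmp n)"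
  by (simp add: Zg_def HH_carrier)

lemma qq_kernel: "kernel (Zg S Hm cmp n) (HH S Hm cmp n) (qq S Hm cmp n) = Zt S Hm cmp n \<inter> Bt S Hm cmp n"
  by (auto simp: kernel_def Zg_def HH_one qq_eq)

lemma HH_iso_quot: "Zg S Hm cmp n Mod (Zt S Hm cmp n \<inter> Bt S Hm cmp n) \<cong> HH S Hm cmp n"
proof -
  have "group_hom (Zg S Hm cmp n) (HH S Hm cmp n) (qq S Hm cmp n)"
    by (simp add: group_hom_def group_hom_axioms_def group_Zg group_HH qq_hom)
  from group_hom.FactGroup_iso[OF this qq_surj] show ?thesis by (simp add: qq_kernel)
qed

end

definition "px x = frag_extend (\<lambda>t. if set (fst t) = {x} then frag_of t else (0 :: ('o list \<times> 'm list) \<Rightarrow>\<^sub>0 int))"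

lemma px_add: "px x (a + b) = px x a + px x b" by (simp add: px_def frag_extend_add)
lemma px_diff: "px x (a - b) = px x a - px x b" by (simp add: px_def frag_extend_diff)
lemma px_0: "px x 0 = 0" by (simp add: px_def)
lemma px_sum: "finite I \<Longrightarrow> px x (sum f I) = (\<Sum>i\<in>I. px x (f i))" by (simp add: px_def frag_extend_sum o_def)

lemma lincat_mono:
  assumes L: "linear_category S Hm cmp idm" and T: "T \<subseteq> S"
  shows "linear_category T Hm cmp idm"
proof -
  note D = L[unfolded linear_category_def]
  have c1: "\<forall>x\<in>S. \<forall>y\<in>S. comm_group (Hm x y)" using D by (rule conjunct1)
  have c2: "\<forall>x\<in>S. \<forall>y\<in>S. \<forall>z\<in>S. \<forall>f\<in>carrier (Hm x y). \<forall>g\<in>carrier (Hm y z).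
        cmp x y z g f \<in> carrier (Hm x z)" using D by (elim conjE)
  have c3: "\<forall>x\<in>S. idm x \<in> carrier (Hm x x)" using D by (elim conjE)
  have c4: "\<forall>w\<in>S. \<forall>x\<in>S. \<forall>y\<in>S. \<forall>z\<in>S. \<forall>f\<in>carrier (Hm w x). \<forall>g\<in>carrier (Hm x y).
        \<forall>h\<in>carrier (Hm y z). cmp w y z h (cmp w x y g f) = cmp w x z (cmp x y z h g) f" using D by (elim conjE)
  have c5: "\<forall>x\<in>S. \<forall>y\<in>S. \<forall>f\<in>carrier (Hm x y).
        cmp x y y (idm y) f = f \<and> cmp x x y f (idm x) = f" using D by (elim conjE)
  have c6: "\<forall>x\<in>S. \<forall>y\<in>S. \<forall>z\<in>S. \<forall>f\<in>carrier (Hm x y). \<forall>f'\<in>carrier (Hm x y).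
        \<forall>g\<in>carrier (Hm y z). \<forall>g'\<in>carrier (Hm y z).
        cmp x y z (g \<otimes>\<^bsub>Hm y z\<^esub> g') f = cmp x y z g f \<otimes>\<^bsub>Hm x z\<^esub> cmp x y z g' f \<and>
        cmp x y z g (f \<otimes>\<^bsub>Hm x y\<^esub> f') = cmp x y z g f \<otimes>\<^bsub>Hm x z\<^esub> cmp x y z g f'" using D by (elim conjE)
  show ?thesis unfolding linear_category_def
  proof (intro conjI)
    show "\<forall>x\<in>T. \<forall>y\<in>T. comm_group (Hm x y)" using c1 T by blast
    show "\<forall>x\<in>T. \<forall>y\<in>T. \<forall>z\<in>T. \<forall>f\<in>carrier (Hm x y). \<forall>g\<in>carrier (Hm y z).
        cmp x y z g f \<in> carrier (Hm x z)" using c2 T by blast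
    show "\<forall>x\<in>T. idm x \<in> carrier (Hm x x)" using c3 T by blast
    show "\<forall>w\<in>T. \<forall>x\<in>T. \<forall>y\<in>T. \<forall>z\<in>T. \<forall>f\<in>carrier (Hm w x). \<forall>g\<in>carrier (Hm x y).
        \<forall>h\<in>carrier (Hm y z). cmp w y z h (cmp w x y g f) = cmp w x z (cmp x y z h g) f" using c4 T by blast
    show "\<forall>x\<in>T. \<forall>y\<in>T. \<forall>f\<in>carrier (Hm x y).
        cmp x y y (idm y) f = f \<and> cmp x x y f (idm x) = f" using c5 T by blast
    show "\<forall>x\<in>T. \<forall>y\<in>T. \<forall>z\<in>T. \<forall>f\<in>carrier (Hm x y). \<forall>f'\<in>carrier (Hm x y).
        \<forall>g\<in>carrier (Hm y z). \<forall>g'\<in>carrier (Hm y z).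
        cmp x y z (g \<otimes>\<^bsub>Hm y z\<^esub> g') f = cmp x y z g f \<otimes>\<^bsub>Hm x z\<^esub> cmp x y z g' f \<and>
        cmp x y z g (f \<otimes>\<^bsub>Hm x y\<^esub> f') = cmp x y z g f \<otimes>\<^bsub>Hm x z\<^esub> cmp x y z g f'" using c6 T by blast
  qed
qed

lemma lc_single: "lc S Hm cmp idm \<Longrightarrow> x \<in> S \<Longrightarrow> lc {x} Hm cmp idm"
  unfolding lc_def by (rule lincat_mono) auto

lemma gens_single: "x \<in> S \<Longrightarrow> hm_gens {x} Hm n = {t \<in> hm_gens S Hm n. set (fst t) = {x}}"
proof -
  assume x: "x \<in> S"
  have "set xs \<subseteq> {x} \<longleftrightarrow> set xs = {x}" if "length xs = Suc n" for xs :: "'a list"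
    using that by (cases xs) auto
  then show ?thesis using x by (auto simp: hm_gens_def)
qed

lemma gsi: "x \<in> S \<Longrightarrow> t \<in> hm_gens {x} Hm n \<longleftrightarrow> (t \<in> hm_gens S Hm n \<and> set (fst t) = {x})"
  by (simp add: gens_single)

lemma rels_single: "x \<in> S \<Longrightarrow> hm_rels {x} Hm n \<subseteq> hm_rels S Hm n"
proof
  fix h assume x: "x \<in> S" and "h \<in> hm_rels {x} Hm n"
  then obtain xs fs k a b where t: "(xs, fs) \<in> hm_gens {x} Hm n" and k: "k < Suc n"
    and ab: "a \<in> carrier (Hm (xs ! k) (xs ! (Suc k mod Suc n)))" "b \<in> carrier (Hm (xs ! k) (xs ! (Suc k mod Suc n)))"
    and req: "h = frag_of (xs, fs[k := a \<otimes>\<^bsub>Hm (xs ! k) (xs ! (Suc k mod Suc n))\<^esub> b])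
       - frag_of (xs, fs[k := a]) - frag_of (xs, fs[k := b])"
    unfolding hm_rels_def by blast
  have t': "(xs, fs) \<in> hm_gens S Hm n" using t gsi[OF x, of "(xs, fs)" Hm n] by simp
  show "h \<in> hm_rels S Hm n" unfolding hm_rels_def
    using t' k ab req by blast
qed

lemma Rr_single: assumes "x \<in> S" "r \<in> Rr {x} Hm n" shows "r \<in> Rr S Hm n"
  using zspan_mono[OF assms(2)[unfolded Rr_def] rels_single[OF assms(1)]] unfolding Rr_def .

lemma px_keys: "Poly_Mapping.keys c \<subseteq> hm_gens S Hm n \<Longrightarrow> x \<in> S \<Longrightarrow> Poly_Mapping.keys (px x c) \<subseteq> hm_gens {x} Hm n"
proof -
  assume k: "Poly_Mapping.keys c \<subseteq> hm_gens S Hm n" and x: "x \<in> S"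
  have "Poly_Mapping.keys (if set (fst t) = {x} then frag_of t else 0) \<subseteq> hm_gens {x} Hm n"
    if t: "t \<in> Poly_Mapping.keys c" for t
  proof (cases "set (fst t) = {x}")
    case True
    then have "t \<in> hm_gens {x} Hm n" using subsetD[OF k t] gsi[OF x, of t Hm n] by simp
    then show ?thesis using True by (simp add: keys_frag_of)
  next
    case False
    then show ?thesis by simp
  qed
  then show ?thesis unfolding px_def by (rule order_trans[OF keys_frag_extend UN_least])
qed

lemma px_id: "Poly_Mapping.keys c \<subseteq> hm_gens {x} Hm n \<Longrightarrow> x \<in> S \<Longrightarrow> px x c = c"
proof -
  assume k: "Poly_Mapping.keys c \<subseteq> hm_gens {x} Hm n" and x: "x \<in> S"
  have "px x c = frag_extend frag_of c"
    unfolding px_def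
  proof (rule frag_extend_eq)
    fix t assume "t \<in> Poly_Mapping.keys c"
    then have "set (fst t) = {x}" using subsetD[OF k] gsi[OF x, of t Hm n] by simp
    then show "(if set (fst t) = {x} then frag_of t else 0) = frag_of t" by simp
  qed
  then show ?thesis by (metis frag_expansion)
qed

lemma px_other: "Poly_Mapping.keys c \<subseteq> hm_gens {x} Hm n \<Longrightarrow> x \<in> S \<Longrightarrow> y \<noteq> x \<Longrightarrow> px y c = 0"
proof -
  assume k: "Poly_Mapping.keys c \<subseteq> hm_gens {x} Hm n" and x: "x \<in> S" and y: "y \<noteq> x"
  show ?thesis unfolding px_def
  proof (rule frag_extend_eq_0)
    fix t assume "t \<in> Poly_Mapping.keys c"
    then have "set (fst t) = {x}" using subsetD[OF k] gsi[OF x, of t Hm n] by simp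
    then show "(if set (fst t) = {y} then frag_of t else 0) = 0" using y by auto
  qed
qed

locale tri = lc +
  assumes UT: "upper_triangular S Hm"
begin

lemma one_in: "x \<in> S \<Longrightarrow> y \<in> S \<Longrightarrow> \<one>\<^bsub>Hm x y\<^esub> \<in> carrier (Hm x y)"
  using grp comm_groupE(2) by blast

lemma chain_le:
  assumes po: "partial_order_on S r" and L: "length xs = Suc n" and X: "set xs \<subseteq> S"
    and st: "\<And>k. k < Suc n \<Longrightarrow> (xs ! k, xs ! (Suc k mod Suc n)) \<in> r"
  shows "set xs = {xs ! 0}"
proof -
  have refl: "refl_on S r" and tr: "trans r" and an: "antisym r"
    using po by (auto simp: partial_order_on_def preorder_on_def)
  have XS: "\<And>i. i < Suc n \<Longrightarrow> xs ! i \<in> S" using X L by (metis nth_mem subsetD)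
  have le: "(xs ! i, xs ! j) \<in> r" if "i \<le> j" "j < Suc n" for i j
    using that
  proof (induction j)
    case 0 then show ?case using refl XS by (auto simp: refl_on_def)
  next
    case (Suc j)
    show ?case
    proof (cases "i = Suc j")
      case True then show ?thesis using refl XS Suc by (auto simp: refl_on_def)
    next
      case False
      then have "(xs ! i, xs ! j) \<in> r" using Suc by auto
      moreover have "(xs ! j, xs ! Suc j) \<in> r" using st[of j] Suc by simp
      ultimately show ?thesis using tr by (meson transD)
    qed
  qed
  have "xs ! k = xs ! 0" if k: "k < Suc n" for k
  proof -
    have "(xs ! 0, xs ! k) \<in> r" using le[of 0 k] k by simp
    moreover have "(xs ! k, xs ! n) \<in> r" using le[of k n] k by simp
    moreover have "(xs ! n, xs ! 0) \<in> r" using st[of n] by simp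
    ultimately show ?thesis using tr an by (meson antisymD transD)
  qed
  then have "\<And>y. y \<in> set xs \<Longrightarrow> y = xs ! 0" using L by (metis in_set_conv_nth)
  moreover have "xs ! 0 \<in> set xs" using L by simp
  ultimately show ?thesis by blast
qed

lemma nondiag_R:
  assumes t: "t \<in> hm_gens S Hm n" and nd: "\<And>x. set (fst t) \<noteq> {x}"
  shows "frag_of t \<in> Rr S Hm n"
proof -
  obtain xs fs where tt: "t = (xs, fs)" by fastforce
  note P = gen_parts[OF t[unfolded tt]]
  obtain r where po: "partial_order_on S r"
    and r: "\<And>x y. x \<in> S \<Longrightarrow> y \<in> S \<Longrightarrow> carrier (Hm x y) \<noteq> {\<one>\<^bsub>Hm x y\<^esub>} \<Longrightarrow> (x, y) \<in> r"
    using UT unfolding upper_triangular_def by blast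
  have X: "set xs \<subseteq> S" using t tt by (auto simp: hm_gens_def)
  have "\<exists>k<Suc n. (xs ! k, xs ! (Suc k mod Suc n)) \<notin> r"
  proof (rule ccontr)
    assume "\<not> (\<exists>k<Suc n. (xs ! k, xs ! (Suc k mod Suc n)) \<notin> r)"
    then have "\<And>k. k < Suc n \<Longrightarrow> (xs ! k, xs ! (Suc k mod Suc n)) \<in> r" by blast
    then have "set xs = {xs ! 0}" by (rule chain_le[OF po P(1) X])
    then show False using nd[of "xs ! 0"] tt by simp
  qed
  then obtain k where k: "k < Suc n" and kr: "(xs ! k, xs ! (Suc k mod Suc n)) \<notin> r" by blast
  define H where "H = Hm (xs ! k) (xs ! (Suc k mod Suc n))"
  have "xs ! k \<in> S" "xs ! (Suc k mod Suc n) \<in> S" using P(3) k by auto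
  then have "carrier H = {\<one>\<^bsub>H\<^esub>}" using r[of "xs ! k" "xs ! (Suc k mod Suc n)"] kr by (auto simp: H_def)
  then have fk: "fs ! k = \<one>\<^bsub>H\<^esub>" using P(4)[OF k] by (auto simp: H_def)
  have G: "comm_group H" using grp[of "xs ! k" "xs ! (Suc k mod Suc n)"] P(3) k by (simp add: H_def)
  have o1: "\<one>\<^bsub>H\<^esub> \<in> carrier H" by (rule comm_groupE(2)[OF G])
  have o: "\<one>\<^bsub>H\<^esub> \<in> carrier H" "\<one>\<^bsub>H\<^esub> \<otimes>\<^bsub>H\<^esub> \<one>\<^bsub>H\<^esub> = \<one>\<^bsub>H\<^esub>"
    using o1 comm_groupE(5)[OF G o1] by auto
  have upd: "fs[k := \<one>\<^bsub>H\<^esub>] = fs" using fk by (metis list_update_id)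
  have "frag_of (xs, fs[k := \<one>\<^bsub>H\<^esub>]) - frag_of (xs, fs[k := \<one>\<^bsub>H\<^esub>]) - frag_of (xs, fs[k := \<one>\<^bsub>H\<^esub>]) \<in> zspan (hm_rels S Hm n)"
    using triple_R[OF t[unfolded tt] k H_def o(1) o(1)] o(2) by simp
  then have "- frag_of t \<in> Rr S Hm n" using upd tt by (simp add: Rr_def)
  then show ?thesis using Rr_uminus by fastforce
qed

end

context tri begin

lemma lcx: "x \<in> S \<Longrightarrow> lc {x} Hm cmp idm"
  using lc_single[OF lc_axioms] .

lemma decomp:
  assumes c: "Poly_Mapping.keys c \<subseteq> hm_gens S Hm n" and X: "finite X"
    and cX: "\<And>t. t \<in> Poly_Mapping.keys c \<Longrightarrow> set (fst t) \<subseteq> X"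
  shows "c - (\<Sum>x\<in>X. px x c) \<in> Rr S Hm n"
proof -
  have "Poly_Mapping.keys c \<subseteq> {t \<in> hm_gens S Hm n. set (fst t) \<subseteq> X}" using c cX by auto
  then show ?thesis
  proof (induction c rule: frag_induction)
    case zero
    then show ?case by (simp add: px_0 Rr_0)
  next
    case (diff a b)
    have eq: "a - b - (\<Sum>x\<in>X. px x (a - b)) = (a - (\<Sum>x\<in>X. px x a)) - (b - (\<Sum>x\<in>X. px x b))"
      by (simp add: px_diff sum_subtractf)
    show ?case unfolding eq by (rule Rr_diff[OF diff(1) diff(2)])
  next
    case (one t)
    show ?case
    proof (cases "\<exists>x. set (fst t) = {x}")
      case True
      then obtain x where x: "set (fst t) = {x}" by blast
      then have xX: "x \<in> X" using one by auto
      have "(\<Sum>y\<in>X. px y (frag_of t)) = (\<Sum>y\<in>X. if y = x then frag_of t else 0)"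
        by (rule sum.cong) (auto simp: px_def x)
      also have "\<dots> = frag_of t" using xX X by simp
      finally show ?thesis by (simp add: Rr_0)
    next
      case False
      then have "(\<Sum>y\<in>X. px y (frag_of t)) = 0" by (simp add: px_def)
      then show ?thesis using nondiag_R[of t n] False one by simp
    qed
  qed
qed

lemma px_R:
  assumes x: "x \<in> S" and r: "r \<in> Rr S Hm n"
  shows "px x r \<in> Rr {x} Hm n"
proof -
  have "frag_extend (\<lambda>t. if set (fst t) = {x} then frag_of t else 0) h \<in> zspan (hm_rels {x} Hm n)"
    if h: "h \<in> hm_rels S Hm n" for h
  proof -
    obtain xs fs k a b where t: "(xs, fs) \<in> hm_gens S Hm n" and k: "k < Suc n"
      and ab: "a \<in> carrier (Hm (xs ! k) (xs ! (Suc k mod Suc n)))" "b \<in> carrier (Hm (xs ! k) (xs ! (Suc k mod Suc n)))"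
      and req: "h = frag_of (xs, fs[k := a \<otimes>\<^bsub>Hm (xs ! k) (xs ! (Suc k mod Suc n))\<^esub> b])
         - frag_of (xs, fs[k := a]) - frag_of (xs, fs[k := b])"
      using h unfolding hm_rels_def by blast
    show ?thesis
    proof (cases "set xs = {x}")
      case True
      have t': "(xs, fs) \<in> hm_gens {x} Hm n" using t True gsi[OF x, of "(xs, fs)" Hm n] by simp
      have "h \<in> hm_rels {x} Hm n" unfolding hm_rels_def using t' k ab req by blast
      then show ?thesis using True req by (simp add: frag_extend_diff zspan.gen)
    next
      case False
      then show ?thesis using req by (simp add: frag_extend_diff zspan.zero)
    qed
  qed
  then show ?thesis using r unfolding Rr_def px_def using zspan_frag_extend by blast
qed

lemma px_bd:
  assumes n: "1 \<le> n" and c: "Poly_Mapping.keys c \<subseteq> hm_gens S Hm n" and x: "x \<in> S"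
  shows "bdd cmp n (px x c) - px x (bdd cmp n c) \<in> Rr {x} Hm (n - 1)"
  using c
proof (induction c rule: frag_induction)
  case zero
  then show ?case by (simp add: px_0 bdd_0 lc.Rr_0[OF lcx[OF x]])
next
  case (diff a b)
  have "bdd cmp n (px x (a - b)) - px x (bdd cmp n (a - b))
     = (bdd cmp n (px x a) - px x (bdd cmp n a)) - (bdd cmp n (px x b) - px x (bdd cmp n b))"
    by (simp add: px_diff bdd_diff)
  then show ?case using lc.Rr_diff[OF lcx[OF x] diff(1) diff(2)] by simp
next
  case (one t)
  show ?case
  proof (cases "\<exists>y. set (fst t) = {y}")
    case True
    then obtain y where y: "set (fst t) = {y}" by blast
    have yS: "y \<in> S" using one y by (auto simp: hm_gens_def)
    have ty: "t \<in> hm_gens {y} Hm n" using one y gsi[OF yS, of t Hm n] by simp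
    have kb: "Poly_Mapping.keys (bdd cmp n (frag_of t)) \<subseteq> hm_gens {y} Hm (n - 1)"
      using lc.bd_keys[OF lcx[OF yS] n] ty by (simp add: keys_frag_of)
    show ?thesis
    proof (cases "y = x")
      case True
      then have "px x (frag_of t) = frag_of t" by (simp add: px_def y)
      moreover have "px x (bdd cmp n (frag_of t)) = bdd cmp n (frag_of t)"
        using px_id[OF kb yS] True by simp
      ultimately show ?thesis by (simp add: lc.Rr_0[OF lcx[OF x]])
    next
      case False
      then have "px x (frag_of t) = 0" by (simp add: px_def y)
      moreover have "px x (bdd cmp n (frag_of t)) = 0"
        using px_other[OF kb yS] False by simp
      ultimately show ?thesis by (simp add: bdd_0 lc.Rr_0[OF lcx[OF x]])
    qed
  next
    case False
    then have "px x (frag_of t) = 0" by (auto simp: px_def)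
    moreover have "bdd cmp n (frag_of t) \<in> Rr S Hm (n - 1)"
      using bd_Rr[OF n nondiag_R[OF one]] False by blast
    then have "px x (bdd cmp n (frag_of t)) \<in> Rr {x} Hm (n - 1)" by (rule px_R[OF x])
    ultimately show ?thesis by (simp add: bdd_0 lc.Rr_uminus[OF lcx[OF x]])
  qed
qed

lemma px_Zt: "c \<in> Zt S Hm cmp n \<Longrightarrow> x \<in> S \<Longrightarrow> px x c \<in> Zt {x} Hm cmp n"
proof -
  assume c: "c \<in> Zt S Hm cmp n" and x: "x \<in> S"
  have k: "Poly_Mapping.keys c \<subseteq> hm_gens S Hm n" using c by (simp add: Zt_def)
  have "bdd cmp n (px x c) \<in> Rr {x} Hm (n - 1)" if n: "n \<noteq> 0"
  proof -
    have "bdd cmp n c \<in> Rr S Hm (n - 1)" using c n by (simp add: Zt_def)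
    then have "px x (bdd cmp n c) \<in> Rr {x} Hm (n - 1)" by (rule px_R[OF x])
    moreover have "bdd cmp n (px x c) - px x (bdd cmp n c) \<in> Rr {x} Hm (n - 1)"
      using px_bd[OF _ k x] n by simp
    ultimately show ?thesis using lc.Rr_add[OF lcx[OF x]] by fastforce
  qed
  then show ?thesis using px_keys[OF k x] by (auto simp: Zt_def)
qed

lemma px_Bt: "c \<in> Bt S Hm cmp n \<Longrightarrow> x \<in> S \<Longrightarrow> px x c \<in> Bt {x} Hm cmp n"
proof -
  assume c: "c \<in> Bt S Hm cmp n" and x: "x \<in> S"
  then obtain e r where e: "Poly_Mapping.keys e \<subseteq> hm_gens S Hm (Suc n)" and r: "r \<in> Rr S Hm n"
    and ce: "c = bdd cmp (Suc n) e + r" by (auto simp: Bt_def)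
  define d where "d = bdd cmp (Suc n) (px x e) - px x (bdd cmp (Suc n) e)"
  have d: "d \<in> Rr {x} Hm n" using px_bd[of "Suc n" e x] e x by (simp add: d_def)
  have "px x c = bdd cmp (Suc n) (px x e) + (px x r - d)"
    by (simp add: ce px_add d_def)
  moreover have "px x r - d \<in> Rr {x} Hm n"
    using px_R[OF x r] d lc.Rr_diff[OF lcx[OF x]] by blast
  moreover have "Poly_Mapping.keys (px x e) \<subseteq> hm_gens {x} Hm (Suc n)" using px_keys[OF e x] .
  ultimately show ?thesis unfolding Bt_def by blast
qed

end

lemma restrict_ext_iff: "((\<lambda>x\<in>A. f x) = (\<lambda>x\<in>A. g x)) \<longleftrightarrow> (\<forall>x\<in>A. f x = g x)"
  by (metis restrict_apply' restrict_ext)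

lemma carrier_Zg: "carrier (Zg S Hm cmp n) = Zt S Hm cmp n"
  by (simp add: Zg_def)

definition "Psi S Hm cmp n c = (\<lambda>x\<in>S. qq {x} Hm cmp n (px x c))"

context tri begin

abbreviation "SG n \<equiv> sum_group S (\<lambda>x. HH {x} Hm cmp n)"

lemma group_SG: "group (SG n)"
  by (rule sum_group) (simp add: lc.group_HH[OF lcx])

lemma carrier_SG: "carrier (SG n) = {u \<in> (\<Pi>\<^sub>E x\<in>S. carrier (HH {x} Hm cmp n)). finite {x \<in> S. u x \<noteq> \<one>\<^bsub>HH {x} Hm cmp n\<^esub>}}"
  by (rule carrier_sum_group) (simp add: lc.group_HH[OF lcx])

lemma objs_finite: "finite (\<Union>t\<in>Poly_Mapping.keys c. set (fst t))"
  by simp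

lemma px_outside: "x \<notin> (\<Union>t\<in>Poly_Mapping.keys c. set (fst t)) \<Longrightarrow> px x c = 0"
  unfolding px_def by (rule frag_extend_eq_0) auto

lemma objs_sub: "Poly_Mapping.keys c \<subseteq> hm_gens S Hm n \<Longrightarrow> (\<Union>t\<in>Poly_Mapping.keys c. set (fst t)) \<subseteq> S"
  by (force simp: hm_gens_def)

lemma Psi_carrier: "c \<in> Zt S Hm cmp n \<Longrightarrow> Psi S Hm cmp n c \<in> carrier (SG n)"
proof -
  assume c: "c \<in> Zt S Hm cmp n"
  have "finite {x \<in> S. Psi S Hm cmp n c x \<noteq> \<one>\<^bsub>HH {x} Hm cmp n\<^esub>}"
  proof (rule finite_subset[OF _ objs_finite[of c]])
    show "{x \<in> S. Psi S Hm cmp n c x \<noteq> \<one>\<^bsub>HH {x} Hm cmp n\<^esub>} \<subseteq> (\<Union>t\<in>Poly_Mapping.keys c. set (fst t))"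
    proof
      fix x assume x: "x \<in> {x \<in> S. Psi S Hm cmp n c x \<noteq> \<one>\<^bsub>HH {x} Hm cmp n\<^esub>}"
      show "x \<in> (\<Union>t\<in>Poly_Mapping.keys c. set (fst t))"
      proof (rule ccontr)
        assume "x \<notin> (\<Union>t\<in>Poly_Mapping.keys c. set (fst t))"
        then have "px x c = 0" by (rule px_outside)
        then have "Psi S Hm cmp n c x = \<one>\<^bsub>HH {x} Hm cmp n\<^esub>"
          using x lc.HH_one[OF lcx, of x n] by (simp add: Psi_def)
        then show False using x by simp
      qed
    qed
  qed
  moreover have "Psi S Hm cmp n c \<in> (\<Pi>\<^sub>E x\<in>S. carrier (HH {x} Hm cmp n))"
    unfolding Psi_def restrict_PiE_iff
  proof
    fix x assume x: "x \<in> S"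
    show "qq {x} Hm cmp n (px x c) \<in> carrier (HH {x} Hm cmp n)"
      using px_Zt[OF c x] lc.HH_carrier[OF lcx[OF x], of n] by simp
  qed
  ultimately show ?thesis by (simp add: carrier_SG)
qed

lemma Psi_hom: "Psi S Hm cmp n \<in> hom (Zg S Hm cmp n) (SG n)"
proof (rule homI)
  fix c assume "c \<in> carrier (Zg S Hm cmp n)"
  then show "Psi S Hm cmp n c \<in> carrier (SG n)" by (simp add: Zg_def Psi_carrier)
next
  fix a b assume "a \<in> carrier (Zg S Hm cmp n)" "b \<in> carrier (Zg S Hm cmp n)"
  have ab: "a \<otimes>\<^bsub>Zg S Hm cmp n\<^esub> b = a + b" by (simp add: Zg_def hm_free_def)
  have "Psi S Hm cmp n (a + b) x = (Psi S Hm cmp n a \<otimes>\<^bsub>SG n\<^esub> Psi S Hm cmp n b) x" for x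
  proof (cases "x \<in> S")
    case True
    have "qq {x} Hm cmp n (px x (a + b)) = qq {x} Hm cmp n (px x a) \<otimes>\<^bsub>HH {x} Hm cmp n\<^esub> qq {x} Hm cmp n (px x b)"
      unfolding px_add by (rule lc.HH_mult[OF lcx[OF True], symmetric])
    then show ?thesis using True by (simp add: Psi_def)
  next
    case False
    then show ?thesis by (simp add: Psi_def)
  qed
  then show "Psi S Hm cmp n (a \<otimes>\<^bsub>Zg S Hm cmp n\<^esub> b) = Psi S Hm cmp n a \<otimes>\<^bsub>SG n\<^esub> Psi S Hm cmp n b"
    unfolding ab by (rule ext)
qed

lemma Psi_kernel: "kernel (Zg S Hm cmp n) (SG n) (Psi S Hm cmp n) = Zt S Hm cmp n \<inter> Bt S Hm cmp n"
proof -
  have "c \<in> Bt S Hm cmp n \<longleftrightarrow> (\<forall>x\<in>S. px x c \<in> Bt {x} Hm cmp n)" if c: "c \<in> Zt S Hm cmp n" for c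
  proof
    assume "c \<in> Bt S Hm cmp n" then show "\<forall>x\<in>S. px x c \<in> Bt {x} Hm cmp n" using px_Bt by blast
  next
    assume B: "\<forall>x\<in>S. px x c \<in> Bt {x} Hm cmp n"
    define X where "X = (\<Union>t\<in>Poly_Mapping.keys c. set (fst t))"
    have kc: "Poly_Mapping.keys c \<subseteq> hm_gens S Hm n" using c by (simp add: Zt_def)
    have XS: "X \<subseteq> S" using objs_sub[OF kc] by (simp add: X_def)
    have fX: "finite X" by (simp add: X_def)
    have "\<forall>x\<in>X. \<exists>p. Poly_Mapping.keys (fst p) \<subseteq> hm_gens {x} Hm (Suc n) \<and> snd p \<in> Rr {x} Hm n \<and> px x c = bdd cmp (Suc n) (fst p) + snd p"
    proof
      fix x assume "x \<in> X"
      then have "px x c \<in> Bt {x} Hm cmp n" using B XS by blast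
      then obtain e r where "Poly_Mapping.keys e \<subseteq> hm_gens {x} Hm (Suc n)" "r \<in> Rr {x} Hm n" "px x c = bdd cmp (Suc n) e + r"
        unfolding Bt_def by blast
      then show "\<exists>p. Poly_Mapping.keys (fst p) \<subseteq> hm_gens {x} Hm (Suc n) \<and> snd p \<in> Rr {x} Hm n \<and> px x c = bdd cmp (Suc n) (fst p) + snd p"
        by (intro exI[of _ "(e, r)"]) simp
    qed
    then obtain f where f: "\<forall>x\<in>X. Poly_Mapping.keys (fst (f x)) \<subseteq> hm_gens {x} Hm (Suc n) \<and> snd (f x) \<in> Rr {x} Hm n \<and> px x c = bdd cmp (Suc n) (fst (f x)) + snd (f x)"
      by (rule bchoice[elim_format]) blast
    define E where "E x = fst (f x)" for x
    define R where "R x = snd (f x)" for x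
    have ER: "\<And>x. x \<in> X \<Longrightarrow> Poly_Mapping.keys (E x) \<subseteq> hm_gens {x} Hm (Suc n) \<and> R x \<in> Rr {x} Hm n \<and>
         px x c = bdd cmp (Suc n) (E x) + R x" using f by (simp add: E_def R_def)
    have d: "c - (\<Sum>x\<in>X. px x c) \<in> Rr S Hm n" using decomp[OF kc fX] by (auto simp: X_def)
    have "c = bdd cmp (Suc n) (\<Sum>x\<in>X. E x) + ((c - (\<Sum>x\<in>X. px x c)) + (\<Sum>x\<in>X. R x))"
    proof -
      have "(\<Sum>x\<in>X. px x c) = (\<Sum>x\<in>X. bdd cmp (Suc n) (E x) + R x)"
        by (rule sum.cong) (use ER in auto)
      also have "\<dots> = bdd cmp (Suc n) (\<Sum>x\<in>X. E x) + (\<Sum>x\<in>X. R x)"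
        by (simp add: sum.distrib bdd_def frag_extend_sum[OF fX] o_def)
      finally show ?thesis by (simp add: algebra_simps)
    qed
    moreover have "Poly_Mapping.keys (\<Sum>x\<in>X. E x) \<subseteq> hm_gens S Hm (Suc n)"
    proof -
      have "E x \<in> carrier (free_Abelian_group (hm_gens S Hm (Suc n)))" if "x \<in> X" for x
      proof -
        have "x \<in> S" using XS that by blast
        then show ?thesis using ER[OF that] gsi[of x S _ Hm "Suc n"] by auto
      qed
      then have "(\<Sum>x\<in>X. E x) \<in> carrier (free_Abelian_group (hm_gens S Hm (Suc n)))"
        by (rule sum_closed_free_Abelian_group)
      then show ?thesis by simp
    qed
    moreover have "(c - (\<Sum>x\<in>X. px x c)) + (\<Sum>x\<in>X. R x) \<in> Rr S Hm n"
    proof (rule Rr_add[OF d])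
      show "(\<Sum>x\<in>X. R x) \<in> Rr S Hm n"
        unfolding Rr_def
      proof (rule zspan_sum)
        fix x assume x: "x \<in> X"
        then have "R x \<in> Rr {x} Hm n" using ER by blast
        then have "R x \<in> Rr S Hm n" using Rr_single[of x S] x XS by blast
        then show "R x \<in> zspan (hm_rels S Hm n)" by (simp add: Rr_def)
      qed
    qed
    ultimately show "c \<in> Bt S Hm cmp n" unfolding Bt_def by blast
  qed
  moreover have "Psi S Hm cmp n c = \<one>\<^bsub>SG n\<^esub> \<longleftrightarrow> (\<forall>x\<in>S. px x c \<in> Bt {x} Hm cmp n)" for c
  proof -
    have "Psi S Hm cmp n c = \<one>\<^bsub>SG n\<^esub> \<longleftrightarrow> (\<forall>x\<in>S. qq {x} Hm cmp n (px x c) = \<one>\<^bsub>HH {x} Hm cmp n\<^esub>)"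
      unfolding Psi_def one_sum_group by (rule restrict_ext_iff)
    also have "\<dots> \<longleftrightarrow> (\<forall>x\<in>S. px x c \<in> Bt {x} Hm cmp n)"
    proof (rule ball_cong[OF refl])
      fix x assume x: "x \<in> S"
      show "qq {x} Hm cmp n (px x c) = \<one>\<^bsub>HH {x} Hm cmp n\<^esub> \<longleftrightarrow> px x c \<in> Bt {x} Hm cmp n"
        using lc.HH_one[OF lcx[OF x], of n] lc.qq_eq[OF lcx[OF x], of n "px x c" 0] by simp
    qed
    finally show ?thesis .
  qed
  ultimately have eqs: "\<And>c. c \<in> Zt S Hm cmp n \<Longrightarrow> c \<in> Bt S Hm cmp n \<longleftrightarrow> (\<forall>x\<in>S. px x c \<in> Bt {x} Hm cmp n)"
    "\<And>c. Psi S Hm cmp n c = \<one>\<^bsub>SG n\<^esub> \<longleftrightarrow> (\<forall>x\<in>S. px x c \<in> Bt {x} Hm cmp n)" by blast+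
  have "c \<in> kernel (Zg S Hm cmp n) (SG n) (Psi S Hm cmp n) \<longleftrightarrow> c \<in> Zt S Hm cmp n \<inter> Bt S Hm cmp n" for c
  proof -
    have "c \<in> kernel (Zg S Hm cmp n) (SG n) (Psi S Hm cmp n) \<longleftrightarrow> c \<in> Zt S Hm cmp n \<and> Psi S Hm cmp n c = \<one>\<^bsub>SG n\<^esub>"
      unfolding kernel_def by (simp only: mem_Collect_eq carrier_Zg)
    then show ?thesis using eqs[of c] by blast
  qed
  then show ?thesis by blast
qed

lemma Psi_surj: "Psi S Hm cmp n ` carrier (Zg S Hm cmp n) = carrier (SG n)"
proof
  show "Psi S Hm cmp n ` carrier (Zg S Hm cmp n) \<subseteq> carrier (SG n)"
    using Psi_carrier by (auto simp: Zg_def)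
  show "carrier (SG n) \<subseteq> Psi S Hm cmp n ` carrier (Zg S Hm cmp n)"
  proof
    fix u assume u: "u \<in> carrier (SG n)"
    define Sp where "Sp = {x \<in> S. u x \<noteq> \<one>\<^bsub>HH {x} Hm cmp n\<^esub>}"
    have fSp: "finite Sp" and uP: "u \<in> (\<Pi>\<^sub>E x\<in>S. carrier (HH {x} Hm cmp n))"
      using u by (auto simp: carrier_SG Sp_def)
    have "\<forall>x\<in>S. \<exists>c. c \<in> Zt {x} Hm cmp n \<and> qq {x} Hm cmp n c = u x"
    proof
      fix x assume x: "x \<in> S"
      have "u x \<in> carrier (HH {x} Hm cmp n)" using uP x by (auto simp: PiE_def Pi_def)
      then show "\<exists>c. c \<in> Zt {x} Hm cmp n \<and> qq {x} Hm cmp n c = u x"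
        using lc.HH_carrier[OF lcx[OF x], of n] by auto
    qed
    then obtain C where C0: "\<forall>x\<in>S. C x \<in> Zt {x} Hm cmp n \<and> qq {x} Hm cmp n (C x) = u x"
      by (rule bchoice[elim_format]) blast
    then have C: "\<And>x. x \<in> S \<Longrightarrow> C x \<in> Zt {x} Hm cmp n \<and> qq {x} Hm cmp n (C x) = u x" by blast
    define c where "c = (\<Sum>x\<in>Sp. C x)"
    have SpS: "Sp \<subseteq> S" by (auto simp: Sp_def)
    have kC: "Poly_Mapping.keys (C x) \<subseteq> hm_gens {x} Hm n" if "x \<in> S" for x
      using C[OF that] by (simp add: Zt_def)
    have "c \<in> Zt S Hm cmp n"
    proof -
      have "C x \<in> carrier (free_Abelian_group (hm_gens S Hm n))" if "x \<in> Sp" for x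
      proof -
        have xS: "x \<in> S" using SpS that by blast
        then show ?thesis using kC[OF xS] gsi[OF xS, of _ Hm n] by auto
      qed
      then have k: "Poly_Mapping.keys c \<subseteq> hm_gens S Hm n"
      proof -
        have "c \<in> carrier (free_Abelian_group (hm_gens S Hm n))"
          unfolding c_def by (rule sum_closed_free_Abelian_group) fact
        then show ?thesis by simp
      qed
      have "bdd cmp n c \<in> Rr S Hm (n - 1)" if "n \<noteq> 0"
      proof -
        have "bdd cmp n c = (\<Sum>x\<in>Sp. bdd cmp n (C x))"
          by (simp add: c_def bdd_def frag_extend_sum fSp o_def)
        also have "\<dots> \<in> Rr S Hm (n - 1)"
          unfolding Rr_def
        proof (rule zspan_sum)
          fix x assume x: "x \<in> Sp"
          then have "bdd cmp n (C x) \<in> Rr {x} Hm (n - 1)" using C[of x] SpS that by (auto simp: Zt_def)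
          then show "bdd cmp n (C x) \<in> zspan (hm_rels S Hm (n - 1))"
            using Rr_single[of x S] x SpS by (auto simp: Rr_def)
        qed
        finally show ?thesis .
      qed
      then show ?thesis using k by (auto simp: Zt_def)
    qed
    moreover have "Psi S Hm cmp n c = u"
    proof (rule ext)
      fix y
      show "Psi S Hm cmp n c y = u y"
      proof (cases "y \<in> S")
        case False
        then show ?thesis using uP by (auto simp: Psi_def PiE_def extensional_def)
      next
        case True
        have "px y c = (\<Sum>x\<in>Sp. px y (C x))" by (simp add: c_def px_sum fSp)
        also have "\<dots> = (\<Sum>x\<in>Sp. if x = y then C y else 0)"
        proof (rule sum.cong)
          fix x assume x: "x \<in> Sp"
          then have xS: "x \<in> S" using SpS by auto
          show "px y (C x) = (if x = y then C y else 0)"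
            using px_id[OF kC[OF xS] xS] px_other[OF kC[OF xS] xS] by auto
        qed simp
        also have "\<dots> = (if y \<in> Sp then C y else 0)" using fSp by simp
        finally have "px y c = (if y \<in> Sp then C y else 0)" .
        then show ?thesis using True C[OF True] lc.HH_one[OF lcx[OF True]]
          by (auto simp: Psi_def Sp_def)
      qed
    qed
    ultimately show "u \<in> Psi S Hm cmp n ` carrier (Zg S Hm cmp n)" by (auto simp: Zg_def)
  qed
qed

theorem main_iso: "HH S Hm cmp n \<cong> SG n"
proof -
  have gh1: "group_hom (Zg S Hm cmp n) (HH S Hm cmp n) (qq S Hm cmp n)"
    by (simp add: group_hom_def group_hom_axioms_def group_Zg group_HH qq_hom)
  have gh2: "group_hom (Zg S Hm cmp n) (SG n) (Psi S Hm cmp n)"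
    by (simp add: group_hom_def group_hom_axioms_def group_Zg group_SG Psi_hom)
  have i1: "Zg S Hm cmp n Mod (Zt S Hm cmp n \<inter> Bt S Hm cmp n) \<cong> HH S Hm cmp n"
    by (rule HH_iso_quot)
  have i2: "Zg S Hm cmp n Mod (Zt S Hm cmp n \<inter> Bt S Hm cmp n) \<cong> SG n"
    using group_hom.FactGroup_iso[OF gh2 Psi_surj] by (simp add: Psi_kernel)
  have "group (Zg S Hm cmp n Mod (Zt S Hm cmp n \<inter> Bt S Hm cmp n))"
    using normal.factorgroup_is_group[OF group_hom.normal_kernel[OF gh1]] by (simp add: qq_kernel)
  then have "HH S Hm cmp n \<cong> Zg S Hm cmp n Mod (Zt S Hm cmp n \<inter> Bt S Hm cmp n)"
    using i1 group.iso_sym by blast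
  then show ?thesis using i2 iso_trans by blast
qed

end

theorem lemma4p1:
  fixes Ob :: "'o set" and Hm :: "'o \<Rightarrow> 'o \<Rightarrow> 'm monoid"
    and cmp :: "'o \<Rightarrow> 'o \<Rightarrow> 'o \<Rightarrow> 'm \<Rightarrow> 'm \<Rightarrow> 'm" and idm :: "'o \<Rightarrow> 'm"
  assumes "linear_category Ob Hm cmp idm"
    and "upper_triangular Ob Hm"
  shows "HH Ob Hm cmp i \<cong> sum_group Ob (\<lambda>x. HH_endo Hm cmp x i)"
proof -
  interpret tri Ob Hm cmp idm
    using assms by (simp add: tri_def tri_axioms_def lc_def)
  show ?thesis using main_iso[of i] by (simp add: HH_endo_def)
qed

end
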